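(* Consider the first-order system described in the context with arbitrary initial data $(Q^0,\mathcal N)=(q_1^0,\dots,q_N^0,\nu_1,\dots,\nu_N)\in\mathbb R^{2N}$. Then: (1) The system has a unique global classical solution (each $q_i\in C^1(\mathbb R_+;\mathbb R)$); in particular $C_i(t)$, $S_i(t)$ and $\mathcal T$ are well defined for each $i\in[N]$ and $t\in\mathbb R_+$. (2) For each $i\in[N]$, $|C_i(t)|=0$ for all but finitely many $t\in\mathbb R_+$. (3) For each $i\in[N]$ and $0\le s\le t<\infty$, $S_i(s)\subset S_i(t)$; in particular $|S_i|$ is a right-continuous nondecreasing step function. (4) $\mathcal T$ is a finite set.
   Context: Let $N\ge1$, $\kappa>0$, $\alpha\in(0,1)$, $[N]=\{1,\dots,N\}$, $\mathbb R_+=(0,\infty)$. The function $G:\mathbb R\to\mathbb R$ is $G(p)=g(|p|)\,p/|p|$ for $p\ne0$, $G(0)=0$, with $g\in C^1([0,\infty))$, $g(0)=0$, $0<m\le g'\le M$ on every compact interval (constants depending on the interval), and $g$ convex or concave on $(0,\infty)$. Let $\Psi(r)=\int_0^r|x|^{-\alpha}dx=\mathrm{sgn}(r)\frac{|r|^{1-\alpha}}{1-\alpha}$. The first-order system is \[ \dot q_i=G\Big(\nu_i+\frac{\kappa}{N}\sum_{k=1}^N\Psi(q_k-q_i)\Big),\quad q_i(0)=q_i^0,\quad i\in[N]. \] For a classical solution $Q$: $q_i,q_j$ collide at time $t$ if $q_i(t)=q_j(t)$ but $\dot q_i(t)\ne\dot q_j(t)$; they stick at time $t$ if $q_i(t)=q_j(t)$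 and $\dot q_i(t)=\dot q_j(t)$. Define $C_i(t)=\{j\in[N]: q_i,q_j \text{ collide at } t\}$, $S_i(t)=\{j\in[N]: q_i,q_j\text{ stick at }t\}$, and \[ \mathcal T=\bigcup_{i\in[N]}\big(\{t\in\mathbb R_+:|C_i(t)|\ne0\}\cup\{t\in\mathbb R_+:|S_i|\text{ is discontinuous at }t\}\big). \] *)

theory Defs
  imports "HOL-Analysis.Analysis"
begin

definition Gf :: "(real \<Rightarrow> real) \<Rightarrow> real \<Rightarrow> real" where
  "Gf g p = (if p = 0 then 0 else g \<bar>p\<bar> * p / \<bar>p\<bar>)"

text \<open>Psi(r) = integral of |x|^(-alpha) from 0 to r = sgn(r) |r|^(1-alpha)/(1-alpha).\<close>
definition Psi :: "real \<Rightarrow> real \<Rightarrow> real" where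
  "Psi \<alpha> r = sgn r * \<bar>r\<bar> powr (1 - \<alpha>) / (1 - \<alpha>)"

definition rhs :: "(real \<Rightarrow> real) \<Rightarrow> real \<Rightarrow> real \<Rightarrow> nat \<Rightarrow> (nat \<Rightarrow> real)
     \<Rightarrow> (nat \<Rightarrow> real \<Rightarrow> real) \<Rightarrow> nat \<Rightarrow> real \<Rightarrow> real" where
  "rhs g \<kappa> \<alpha> N \<nu> Q i t =
     Gf g (\<nu> i + \<kappa> / real N * (\<Sum>k=1..N. Psi \<alpha> (Q k t - Q i t)))"

definition vel :: "(real \<Rightarrow> real) \<Rightarrow> real \<Rightarrow> real" where
  "vel f t = vector_derivative f (at t within {0..})"

definition is_classical_solution :: "(real \<Rightarrow> real) \<Rightarrow> real \<Rightarrow> real \<Rightarrow> nat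
     \<Rightarrow> (nat \<Rightarrow> real) \<Rightarrow> (nat \<Rightarrow> real) \<Rightarrow> (nat \<Rightarrow> real \<Rightarrow> real) \<Rightarrow> bool" where
  "is_classical_solution g \<kappa> \<alpha> N q0 \<nu> Q \<longleftrightarrow>
     (\<forall>i\<in>{1..N}. Q i 0 = q0 i
        \<and> (\<forall>t\<ge>0. (Q i has_real_derivative rhs g \<kappa> \<alpha> N \<nu> Q i t) (at t within {0..}))
        \<and> continuous_on {0..} (vel (Q i)))"

definition collide :: "(nat \<Rightarrow> real \<Rightarrow> real) \<Rightarrow> nat \<Rightarrow> nat \<Rightarrow> real \<Rightarrow> bool" where
  "collide Q i j t \<longleftrightarrow> Q i t = Q j t \<and> vel (Q i) t \<noteq> vel (Q j) t"

definition stick :: "(nat \<Rightarrow> real \<Rightarrow> real) \<Rightarrow> nat \<Rightarrow> nat \<Rightarrow> real \<Rightarrow> bool" where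
  "stick Q i j t \<longleftrightarrow> Q i t = Q j t \<and> vel (Q i) t = vel (Q j) t"

definition Cset :: "nat \<Rightarrow> (nat \<Rightarrow> real \<Rightarrow> real) \<Rightarrow> nat \<Rightarrow> real \<Rightarrow> nat set" where
  "Cset N Q i t = {j\<in>{1..N}. collide Q i j t}"

definition Sset :: "nat \<Rightarrow> (nat \<Rightarrow> real \<Rightarrow> real) \<Rightarrow> nat \<Rightarrow> real \<Rightarrow> nat set" where
  "Sset N Q i t = {j\<in>{1..N}. stick Q i j t}"

definition Tset :: "nat \<Rightarrow> (nat \<Rightarrow> real \<Rightarrow> real) \<Rightarrow> real set" where
  "Tset N Q = (\<Union>i\<in>{1..N}.
      {t. t > 0 \<and> card (Cset N Q i t) \<noteq> 0}
    \<union> {t. t > 0 \<and> \<not> continuous (at t within {0<..}) (\<lambda>s. real (card (Sset N Q i s)))})"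

end

theory Submission
  imports Defs "HOL-Analysis.Analysis"
begin


lemma cmp_eps:
  fixes D d :: "nat \<Rightarrow> real \<Rightarrow> real" and I :: "nat set"
  assumes fin: "finite I" and ab: "a \<le> b" and eps: "\<epsilon> > 0"
   and cont: "\<And>i. i\<in>I \<Longrightarrow> continuous_on {a..b} (D i)"
   and der: "\<And>i t. i\<in>I \<Longrightarrow> a \<le> t \<Longrightarrow> t < b \<Longrightarrow> (D i has_real_derivative d i t) (at t within {t..b})"
   and amax: "\<And>p t. p\<in>I \<Longrightarrow> a \<le> t \<Longrightarrow> t < b \<Longrightarrow> (\<And>k. k\<in>I \<Longrightarrow> D k t \<le> D p t) \<Longrightarrow> d p t \<le> \<eta>"
   and init: "\<And>i. i\<in>I \<Longrightarrow> D i a \<le> M0"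
   and i: "i \<in> I" and t: "a \<le> t" "t \<le> b"
  shows "D i t \<le> M0 + (\<eta>+\<epsilon>)*(t-a)"
proof (rule ccontr)
  assume neg: "\<not> ?thesis"
  define \<phi> where "\<phi> k x = D k x - (\<eta>+\<epsilon>)*(x-a)" for k x
  define S where "S = {x\<in>{a..t}. \<forall>k\<in>I. \<phi> k x \<le> M0}"
  have cphi: "continuous_on {a..b} (\<phi> k)" if "k \<in> I" for k
    unfolding \<phi>_def using cont[OF that] by (intro continuous_intros) auto
  have aS: "a \<in> S" using init t unfolding S_def \<phi>_def by auto
  have tS: "t \<notin> S" using neg i unfolding S_def \<phi>_def by (auto simp: algebra_simps)
  have Sb: "S \<subseteq> {a..t}" unfolding S_def by auto
  have clS: "closed S"
  proof -
    have "S = {a..t} \<inter> (\<Inter>k\<in>I. {a..t} \<inter> \<phi> k -` {..M0})"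
      unfolding S_def by auto
    moreover have "closed ({a..t} \<inter> \<phi> k -` {..M0})" if "k \<in> I" for k
      by (rule continuous_closed_preimage) (use cphi[OF that] t in \<open>auto intro: continuous_on_subset\<close>)
    ultimately show ?thesis by (metis (no_types, lifting) closed_INT closed_Int closed_atLeastAtMost)
  qed
  define s where "s = Sup S"
  have bddS: "bdd_above S" using Sb by (meson bdd_above_Icc bdd_above_mono)
  have sS: "s \<in> S" unfolding s_def using closed_contains_Sup[OF _ bddS clS] aS by auto
  have st: "s < t" using sS tS Sb by (cases "s = t") auto
  have as: "a \<le> s" using sS Sb by auto
  have ev: "\<forall>\<^sub>F x in at_right s. \<phi> k x \<le> M0" if k: "k \<in> I" for k
  proof (cases "\<phi> k s < M0")
    case True
    have "(\<phi> k \<longlongrightarrow> \<phi> k s) (at s within {a..b})"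
      using cphi[OF k] as st t by (simp add: continuous_on_def)
    then have "\<forall>\<^sub>F x in at s within {a..b}. \<phi> k x < M0"
      using True by (rule order_tendstoD)
    then obtain e where e: "e > 0" "\<And>x. x \<in> {a..b} \<Longrightarrow> x \<noteq> s \<Longrightarrow> dist x s < e \<Longrightarrow> \<phi> k x < M0"
      unfolding eventually_at by auto
    show ?thesis unfolding eventually_at_right_field
      by (rule exI[of _ "min (s+e) b"]) (use e as st t in \<open>auto simp: dist_real_def intro!: less_imp_le\<close>)
  next
    case False
    then have eq: "\<phi> k s = M0" using sS k unfolding S_def by force
    have am: "D j s \<le> D k s" if "j \<in> I" for j
      using sS that eq unfolding S_def \<phi>_def by auto
    have dk: "d k s \<le> \<eta>" using amax[OF k as] st t am by auto
    have "(\<phi> k has_real_derivative d k s - (\<eta>+\<epsilon>)) (at s within {s..b})"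
      unfolding \<phi>_def using der[OF k as] st t
      by (auto intro!: derivative_eq_intros)
    from has_real_derivative_neg_dec_right[OF this] dk eps
    obtain e where e: "e > 0" "\<And>h. h > 0 \<Longrightarrow> s + h \<in> {s..b} \<Longrightarrow> h < e \<Longrightarrow> \<phi> k (s+h) < \<phi> k s"
      by force
    show ?thesis unfolding eventually_at_right_field
    proof (rule exI[of _ "min (s+e) b"], intro conjI allI impI)
      show "s < min (s+e) b" using e st t by auto
      fix y assume "s < y" "y < min (s+e) b"
      then show "\<phi> k y \<le> M0" using e(2)[of "y - s"] eq by auto
    qed
  qed
  have "\<forall>\<^sub>F x in at_right s. \<forall>k\<in>I. \<phi> k x \<le> M0"
    using ev fin by (simp add: eventually_ball_finite)
  then obtain c where c: "c > s" "\<And>y. s < y \<Longrightarrow> y < c \<Longrightarrow> \<forall>k\<in>I. \<phi> k y \<le> M0"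
    unfolding eventually_at_right_field by auto
  define y where "y = (s + min c t)/2"
  have "y \<in> S" unfolding S_def using c st as unfolding y_def by auto
  moreover have "y > s" using c st unfolding y_def by auto
  ultimately show False using cSup_upper[OF _ bddS] unfolding s_def by fastforce
qed

lemma cmp:
  fixes D d :: "nat \<Rightarrow> real \<Rightarrow> real" and I :: "nat set"
  assumes fin: "finite I" and ab: "a \<le> b"
   and cont: "\<And>i. i\<in>I \<Longrightarrow> continuous_on {a..b} (D i)"
   and der: "\<And>i t. i\<in>I \<Longrightarrow> a \<le> t \<Longrightarrow> t < b \<Longrightarrow> (D i has_real_derivative d i t) (at t within {t..b})"
   and amax: "\<And>p t. p\<in>I \<Longrightarrow> a \<le> t \<Longrightarrow> t < b \<Longrightarrow> (\<And>k. k\<in>I \<Longrightarrow> D k t \<le> D p t) \<Longrightarrow> d p t \<le> \<eta>"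
   and init: "\<And>i. i\<in>I \<Longrightarrow> D i a \<le> M0"
   and i: "i \<in> I" and t: "a \<le> t" "t \<le> b"
  shows "D i t \<le> M0 + \<eta>*(t-a)"
proof (rule ccontr)
  assume "\<not> ?thesis"
  then have pos: "D i t - M0 - \<eta>*(t-a) > 0" by auto
  then have ta: "t > a" using init[OF i] t by (cases "t = a") auto
  define \<epsilon> where "\<epsilon> = (D i t - M0 - \<eta>*(t-a)) / (2*(t-a))"
  have e: "\<epsilon> > 0" using pos ta unfolding \<epsilon>_def by auto
  have "D i t \<le> M0 + (\<eta>+\<epsilon>)*(t-a)"
    by (rule cmp_eps[OF fin ab e cont der amax init i t]) auto
  moreover have "\<epsilon>*(t-a) = (D i t - M0 - \<eta>*(t-a))/2" unfolding \<epsilon>_def using ta by (simp add: field_simps)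
  ultimately show False using pos by (simp add: algebra_simps)
qed




lemma mono_right:
  fixes f f' :: "real \<Rightarrow> real"
  assumes "a \<le> b" "continuous_on {a..b} f"
    "\<And>t. a \<le> t \<Longrightarrow> t < b \<Longrightarrow> (f has_real_derivative f' t) (at t within {t..b})"
    "\<And>t. a \<le> t \<Longrightarrow> t < b \<Longrightarrow> f' t \<le> \<eta>"
  shows "f b \<le> f a + \<eta>*(b-a)"
  using cmp[of "{0::nat}" a b "\<lambda>_. f" "\<lambda>_. f'" \<eta> "f a" 0 b] assms by auto

lemma floor_facts:
  fixes h t :: real assumes "h > 0" "0 \<le> t"
  shows "real (nat \<lfloor>t/h\<rfloor>) * h \<le> t" "t < (real (nat \<lfloor>t/h\<rfloor>) + 1) * h"
proof -
  have "real (nat \<lfloor>t/h\<rfloor>) = of_int \<lfloor>t/h\<rfloor>" using assms by simp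
  moreover have "of_int \<lfloor>t/h\<rfloor> \<le> t/h" by linarith
  then have "of_int \<lfloor>t/h\<rfloor> * h \<le> t" using assms(1) by (metis pos_le_divide_eq)
  moreover have "t/h < of_int \<lfloor>t/h\<rfloor> + 1" by linarith
  then have "t < (of_int \<lfloor>t/h\<rfloor> + 1) * h" using assms(1) by (metis pos_divide_less_eq)
  ultimately show "real (nat \<lfloor>t/h\<rfloor>) * h \<le> t" "t < (real (nat \<lfloor>t/h\<rfloor>) + 1) * h"
    by simp_all
qed

lemma floor_unique':
  fixes h s :: real assumes "h > 0" "real n * h \<le> s" "s < (real n + 1) * h"
  shows "nat \<lfloor>s/h\<rfloor> = n"
proof -
  have "real n \<le> s/h" "s/h < real n + 1" using assms by (auto simp: field_simps)
  then have "\<lfloor>s/h\<rfloor> = int n" by (simp add: floor_eq_iff)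
  then show ?thesis by simp
qed

lemma sum_split_last:
  fixes f :: "nat \<Rightarrow> real"
  assumes "n < K" "\<And>m. n < m \<Longrightarrow> f m = 0"
  shows "(\<Sum>m<K. f m) = (\<Sum>m<n. f m) + f n"
  using assms
proof (induction K)
  case 0 then show ?case by simp
next
  case (Suc K)
  show ?case
  proof (cases "n < K")
    case True then show ?thesis using Suc by simp
  next
    case False then have "K = n" using Suc by simp
    then show ?thesis by simp
  qed
qed

primrec eul :: "((nat \<Rightarrow> real) \<Rightarrow> nat \<Rightarrow> real) \<Rightarrow> (nat \<Rightarrow> real) \<Rightarrow> real \<Rightarrow> nat \<Rightarrow> nat \<Rightarrow> real" where
  "eul F q0 h 0 = q0"
| "eul F q0 h (Suc n) = (\<lambda>i. eul F q0 h n i + h * F (eul F q0 h n) i)"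

definition epol :: "((nat \<Rightarrow> real) \<Rightarrow> nat \<Rightarrow> real) \<Rightarrow> (nat \<Rightarrow> real) \<Rightarrow> real \<Rightarrow> nat \<Rightarrow> real \<Rightarrow> nat \<Rightarrow> real" where
  "epol F q0 h K t i = q0 i + (\<Sum>m<K. F (eul F q0 h m) i * min h (max 0 (t - real m * h)))"

lemma eul_sum: "eul F q0 h n i = q0 i + h * (\<Sum>m<n. F (eul F q0 h m) i)"
  by (induction n) (auto simp: algebra_simps)

lemma eul_bound:
  assumes V: "\<And>x. \<bar>F x i\<bar> \<le> V" and h: "h \<ge> 0"
  shows "\<bar>eul F q0 h n i - q0 i\<bar> \<le> V * (real n * h)"
proof -
  have "\<bar>\<Sum>m<n. F (eul F q0 h m) i\<bar> \<le> (\<Sum>m<n. \<bar>F (eul F q0 h m) i\<bar>)" by (rule sum_abs)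
  also have "\<dots> \<le> of_nat (card {..<n}) * V" by (rule sum_bounded_above) (rule V)
  finally have "\<bar>\<Sum>m<n. F (eul F q0 h m) i\<bar> \<le> real n * V" by simp
  then have "h * \<bar>\<Sum>m<n. F (eul F q0 h m) i\<bar> \<le> h * (real n * V)" using h by (rule mult_left_mono)
  moreover have "\<bar>eul F q0 h n i - q0 i\<bar> = h * \<bar>\<Sum>m<n. F (eul F q0 h m) i\<bar>"
    using h by (subst eul_sum) (simp add: abs_mult)
  ultimately show ?thesis by (simp add: algebra_simps)
qed

lemma epol_eq:
  assumes h: "h > 0" and t: "0 \<le> t" and nK: "nat \<lfloor>t/h\<rfloor> < K"
  shows "epol F q0 h K t i = eul F q0 h (nat \<lfloor>t/h\<rfloor>) i + (t - real (nat \<lfloor>t/h\<rfloor>) * h) * F (eul F q0 h (nat \<lfloor>t/h\<rfloor>)) i"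
proof -
  define n where "n = nat \<lfloor>t/h\<rfloor>"
  have f1: "real n * h \<le> t" "t < (real n + 1) * h" using floor_facts[OF h t] unfolding n_def by auto
  have z: "F (eul F q0 h m) i * min h (max 0 (t - real m * h)) = 0" if "n < m" for m
  proof -
    have "real m \<ge> real n + 1" using that by simp
    then have "real m * h \<ge> (real n + 1) * h" using h by (intro mult_right_mono) auto
    then have "max 0 (t - real m * h) = 0" using f1 by simp
    then show ?thesis using h by simp
  qed
  have s: "(\<Sum>m<K. F (eul F q0 h m) i * min h (max 0 (t - real m * h)))
     = (\<Sum>m<n. F (eul F q0 h m) i * min h (max 0 (t - real m * h))) + F (eul F q0 h n) i * min h (max 0 (t - real n * h))"
    by (rule sum_split_last) (use nK z n_def in auto)
  have lo: "min h (max 0 (t - real m * h)) = h" if "m < n" for m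
  proof -
    have "real m + 1 \<le> real n" using that by simp
    then have "(real m + 1) * h \<le> real n * h" using h by (intro mult_right_mono) auto
    then show ?thesis using f1 by (simp add: algebra_simps)
  qed
  have A: "(\<Sum>m<n. F (eul F q0 h m) i * min h (max 0 (t - real m * h))) = (\<Sum>m<n. F (eul F q0 h m) i * h)"
    by (rule sum.cong) (auto simp: lo)
  have B: "min h (max 0 (t - real n * h)) = t - real n * h" using f1 by (simp add: algebra_simps)
  show ?thesis unfolding epol_def s n_def[symmetric] eul_sum[of F q0 h n i] A B
    by (simp add: sum_distrib_left sum_distrib_right algebra_simps)
qed

lemma epol_cont: "continuous_on S (\<lambda>t. epol F q0 h K t i)"
  unfolding epol_def by (intro continuous_intros)

lemma epol_deriv:
  assumes h: "h > 0" and t: "0 \<le> t" and nK: "t < real K * h"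
  shows "((\<lambda>t. epol F q0 h K t i) has_real_derivative F (eul F q0 h (nat \<lfloor>t/h\<rfloor>)) i) (at t within {t..})"
proof -
  define n where "n = nat \<lfloor>t/h\<rfloor>"
  have f1: "real n * h \<le> t" "t < (real n + 1) * h" using floor_facts[OF h t] unfolding n_def by auto
  have nK': "n < K"
  proof -
    have "real n * h < real K * h" using f1 nK by linarith
    then show ?thesis using h by simp
  qed
  define e where "e = (real n + 1) * h - t"
  have e: "e > 0" using f1 unfolding e_def by auto
  have "((\<lambda>s. eul F q0 h n i + (s - real n * h) * F (eul F q0 h n) i) has_real_derivative F (eul F q0 h n) i) (at t within {t..})"
    by (auto intro!: derivative_eq_intros)
  then show ?thesis unfolding n_def[symmetric]
  proof (rule has_field_derivative_transform_within[OF _ e])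
    fix s assume s: "s \<in> {t..}" "dist s t < e"
    then have s1: "real n * h \<le> s" "s < (real n + 1) * h" using f1 unfolding e_def dist_real_def by auto
    have sn: "nat \<lfloor>s/h\<rfloor> = n" by (rule floor_unique'[OF h s1])
    have "0 \<le> s" using s t by auto
    then show "eul F q0 h n i + (s - real n * h) * F (eul F q0 h n) i = epol F q0 h K s i"
      using epol_eq[OF h \<open>0 \<le> s\<close>, of K F q0 i] sn nK' by simp
  qed auto
qed




lemma mv_right:
  fixes f f' :: "real \<Rightarrow> real"
  assumes ab: "a \<le> b" and cf: "continuous_on {a..b} f"
    and d: "\<And>\<tau>. a \<le> \<tau> \<Longrightarrow> \<tau> < b \<Longrightarrow> (f has_real_derivative f' \<tau>) (at \<tau> within {\<tau>..b})"
    and bd: "\<And>\<tau>. a \<le> \<tau> \<Longrightarrow> \<tau> < b \<Longrightarrow> \<bar>f' \<tau> - c\<bar> \<le> \<eta>"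
  shows "\<bar>f b - f a - c*(b-a)\<bar> \<le> \<eta>*(b-a)"
proof -
  have 1: "(\<lambda>\<tau>. f \<tau> - c*\<tau>) b \<le> (\<lambda>\<tau>. f \<tau> - c*\<tau>) a + \<eta>*(b-a)"
  proof (rule mono_right[OF ab])
    show "continuous_on {a..b} (\<lambda>\<tau>. f \<tau> - c*\<tau>)" using cf by (intro continuous_intros)
    fix t assume "a \<le> t" "t < b"
    show "((\<lambda>\<tau>. f \<tau> - c*\<tau>) has_real_derivative f' t - c) (at t within {t..b})"
      using d[OF \<open>a \<le> t\<close> \<open>t < b\<close>] by (auto intro!: derivative_eq_intros)
    show "f' t - c \<le> \<eta>" using bd[OF \<open>a \<le> t\<close> \<open>t < b\<close>] by auto
  qed
  have 2: "(\<lambda>\<tau>. c*\<tau> - f \<tau>) b \<le> (\<lambda>\<tau>. c*\<tau> - f \<tau>) a + \<eta>*(b-a)"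
  proof (rule mono_right[OF ab])
    show "continuous_on {a..b} (\<lambda>\<tau>. c*\<tau> - f \<tau>)" using cf by (intro continuous_intros)
    fix t assume "a \<le> t" "t < b"
    show "((\<lambda>\<tau>. c*\<tau> - f \<tau>) has_real_derivative c - f' t) (at t within {t..b})"
      using d[OF \<open>a \<le> t\<close> \<open>t < b\<close>] by (auto intro!: derivative_eq_intros)
    show "c - f' t \<le> \<eta>" using bd[OF \<open>a \<le> t\<close> \<open>t < b\<close>] by auto
  qed
  show ?thesis using 1 2 by (simp add: abs_le_iff algebra_simps)
qed

lemma deriv_eps:
  fixes f :: "real \<Rightarrow> real"
  assumes "\<And>\<epsilon>. \<epsilon> > 0 \<Longrightarrow> \<exists>\<delta>>0. \<forall>s\<in>S. \<bar>s - t\<bar> < \<delta> \<longrightarrow> \<bar>f s - f t - c*(s-t)\<bar> \<le> \<epsilon>*\<bar>s-t\<bar>"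
  shows "(f has_real_derivative c) (at t within S)"
  unfolding has_field_derivative_iff tendsto_iff
proof (intro allI impI)
  fix e :: real assume e: "e > 0"
  obtain \<delta> where d: "\<delta> > 0" "\<And>s. s\<in>S \<Longrightarrow> \<bar>s - t\<bar> < \<delta> \<Longrightarrow> \<bar>f s - f t - c*(s-t)\<bar> \<le> (e/2)*\<bar>s-t\<bar>"
    using assms[of "e/2"] e by auto
  show "\<forall>\<^sub>F x in at t within S. dist ((f x - f t) / (x - t)) c < e"
    unfolding eventually_at
  proof (rule exI[of _ \<delta>], intro conjI ballI impI)
    show "\<delta> > 0" by fact
    fix x assume x: "x \<in> S" "x \<noteq> t \<and> dist x t < \<delta>"
    then have xt: "x - t \<noteq> 0" by auto
    have eq: "(f x - f t) / (x - t) - c = (f x - f t - c*(x-t)) / (x - t)" using xt by (simp add: field_simps)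
    have "\<bar>f x - f t - c*(x-t)\<bar> \<le> (e/2)*\<bar>x-t\<bar>" using d(2)[OF x(1)] x by (auto simp: dist_real_def)
    then have "\<bar>f x - f t - c*(x-t)\<bar> / \<bar>x - t\<bar> \<le> e/2" using xt by (simp add: divide_le_eq)
    then show "dist ((f x - f t) / (x - t)) c < e" unfolding dist_real_def eq abs_divide using e by linarith
  qed
qed




lemma ex_sol:
  fixes F :: "(nat \<Rightarrow> real) \<Rightarrow> nat \<Rightarrow> real" and q0 :: "nat \<Rightarrow> real"
  assumes T: "T > 0" and V0: "V \<ge> 0"
    and Vb: "\<And>x i. \<bar>F x i\<bar> \<le> V"
    and C: "\<And>k. k \<in> {1..N} \<Longrightarrow> \<bar>q0 k\<bar> + V*T \<le> C"
    and uc: "\<And>\<epsilon>. \<epsilon> > 0 \<Longrightarrow> \<exists>\<delta>>0. \<forall>x y. (\<forall>k\<in>{1..N}. \<bar>x k\<bar> \<le> C \<and> \<bar>y k\<bar> \<le> C \<and> \<bar>x k - y k\<bar> \<le> \<delta>)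
               \<longrightarrow> (\<forall>i\<in>{1..N}. \<bar>F x i - F y i\<bar> \<le> \<epsilon>)"
    and qm: "\<And>x y p. p \<in> {1..N} \<Longrightarrow> (\<forall>k\<in>{1..N}. x k - y k \<le> x p - y p) \<Longrightarrow> F x p \<le> F y p"
  shows "\<exists>Q. \<forall>i\<in>{1..N}. Q i 0 = q0 i \<and>
            (\<forall>t\<in>{0..T}. (Q i has_real_derivative F (\<lambda>k. Q k t) i) (at t within {0..T}))"
proof -
  define hs where "hs m = 1 / (real m + 1)" for m :: nat
  define Km where "Km m = nat \<lceil>T / hs m\<rceil> + 1" for m
  define P where "P m t = epol F q0 (hs m) (Km m) t" for m t
  define nm where "nm m t = nat \<lfloor>t / hs m\<rfloor>" for m t
  define Y where "Y m t = eul F q0 (hs m) (nm m t)" for m t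
  have hpos: "hs m > 0" for m unfolding hs_def by auto
  have KT: "T < real (Km m) * hs m" for m
  proof -
    have "T / hs m \<le> real (nat \<lceil>T / hs m\<rceil>)" by linarith
    then have "T / hs m + 1 \<le> real (Km m)" unfolding Km_def by simp
    then have "(T / hs m + 1) * hs m \<le> real (Km m) * hs m" using hpos[of m] by (intro mult_right_mono) auto
    moreover have "(T / hs m + 1) * hs m = T + hs m" using hpos[of m] by (simp add: field_simps)
    ultimately show ?thesis using hpos[of m] by linarith
  qed
  have nmt: "real (nm m t) * hs m \<le> t" "t < (real (nm m t)+1) * hs m" if "0 \<le> t" for m t
    using floor_facts[OF hpos that] unfolding nm_def by auto
  have nmK: "nm m t < Km m" if "0 \<le> t" "t \<le> T" for m t
  proof -
    have "real (nm m t) * hs m < real (Km m) * hs m" using nmt[OF that(1), of m] KT[of m] that by linarith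
    then show ?thesis using hpos[of m] by simp
  qed
  have Peq: "P m t i = Y m t i + (t - real (nm m t) * hs m) * F (Y m t) i" if "0 \<le> t" "t \<le> T" for m t i
    unfolding P_def Y_def using epol_eq[OF hpos that(1) nmK[OF that, unfolded nm_def]] unfolding nm_def by simp
  have Ybox: "\<bar>Y m t k - q0 k\<bar> \<le> V * t" if "0 \<le> t" for m t k
  proof -
    have "\<bar>Y m t k - q0 k\<bar> \<le> V * (real (nm m t) * hs m)"
      unfolding Y_def by (rule eul_bound) (use Vb hpos[of m] in \<open>auto intro: less_imp_le\<close>)
    also have "\<dots> \<le> V * t" using nmt[OF that, of m] V0 by (intro mult_left_mono) auto
    finally show ?thesis .
  qed
  have PY: "\<bar>P m t k - Y m t k\<bar> \<le> V * hs m" if "0 \<le> t" "t \<le> T" for m t k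
  proof -
    have "\<bar>P m t k - Y m t k\<bar> = (t - real (nm m t) * hs m) * \<bar>F (Y m t) k\<bar>"
      using Peq[OF that] nmt[OF that(1), of m] by (simp add: abs_mult)
    also have "\<dots> \<le> hs m * V" using nmt[OF that(1), of m] Vb[of "Y m t" k] hpos[of m] by (intro mult_mono) (auto simp: algebra_simps)
    finally show ?thesis by (simp add: mult.commute)
  qed
  have Pbox: "\<bar>P m t k - q0 k\<bar> \<le> V * t" if "0 \<le> t" "t \<le> T" for m t k
  proof -
    have a: "\<bar>Y m t k - q0 k\<bar> \<le> V * (real (nm m t) * hs m)"
      unfolding Y_def by (rule eul_bound) (use Vb hpos[of m] in \<open>auto intro: less_imp_le\<close>)
    have b: "\<bar>(t - real (nm m t) * hs m) * F (Y m t) k\<bar> \<le> (t - real (nm m t) * hs m) * V"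
      using nmt[OF that(1), of m] Vb[of "Y m t" k] by (simp add: abs_mult mult_left_mono)
    have "\<bar>P m t k - q0 k\<bar> \<le> \<bar>Y m t k - q0 k\<bar> + \<bar>(t - real (nm m t) * hs m) * F (Y m t) k\<bar>"
      using Peq[OF that] by simp
    also have "\<dots> \<le> V * t" using a b by (simp add: algebra_simps)
    finally show ?thesis .
  qed
  have Pder: "((\<lambda>\<tau>. P m \<tau> i) has_real_derivative F (Y m t) i) (at t within {t..b})"
    if "0 \<le> t" "t < T" "b \<le> T" for m t i b
  proof -
    have "((\<lambda>\<tau>. P m \<tau> i) has_real_derivative F (Y m t) i) (at t within {t..})"
      unfolding P_def Y_def nm_def by (rule epol_deriv[OF hpos that(1)]) (use KT[of m] that in auto)
    then show ?thesis by (rule has_field_derivative_subset) auto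
  qed
  have Pcont: "continuous_on S (\<lambda>\<tau>. P m \<tau> i)" for S m i unfolding P_def by (rule epol_cont)
  have P0: "P m 0 i = q0 i" for m i
  proof -
    have z: "min (hs m) (max 0 (0 - real j * hs m)) = 0" for j
    proof -
      have "real j * hs m \<ge> 0" using hpos[of m] by simp
      then show ?thesis using hpos[of m] by simp
    qed
    show ?thesis unfolding P_def epol_def z by simp
  qed
  have inbox: "\<bar>x k\<bar> \<le> C" if "t \<le> T" "k \<in> {1..N}" "\<bar>x k - q0 k\<bar> \<le> V*t" for x k t
  proof -
    have "V * t \<le> V * T" using that V0 by (intro mult_left_mono) auto
    then show ?thesis using C[OF that(2)] that(3) by linarith
  qed
  have defect: "\<exists>M. \<forall>m\<ge>M. \<forall>t. 0 \<le> t \<longrightarrow> t \<le> T \<longrightarrow> (\<forall>i\<in>{1..N}. \<bar>F (Y m t) i - F (P m t) i\<bar> \<le> \<epsilon>)"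
    if e: "\<epsilon> > 0" for \<epsilon>
  proof -
    obtain \<delta> where d: "\<delta> > 0" "\<forall>x y. (\<forall>k\<in>{1..N}. \<bar>x k\<bar> \<le> C \<and> \<bar>y k\<bar> \<le> C \<and> \<bar>x k - y k\<bar> \<le> \<delta>)
               \<longrightarrow> (\<forall>i\<in>{1..N}. \<bar>F x i - F y i\<bar> \<le> \<epsilon>)" using uc[OF e] by auto
    define M where "M = nat \<lceil>V / \<delta>\<rceil>"
    have Vh: "V * hs m \<le> \<delta>" if "m \<ge> M" for m
    proof -
      have "V / \<delta> \<le> real M" unfolding M_def by linarith
      also have "\<dots> \<le> real m + 1" using that by simp
      finally have "V \<le> \<delta> * (real m + 1)" using d(1) by (simp add: divide_le_eq mult.commute)
      then show ?thesis unfolding hs_def by (simp add: divide_le_eq)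
    qed
    show ?thesis
    proof (intro exI[of _ M] allI impI ballI)
      fix m t i assume m: "m \<ge> M" and t: "0 \<le> t" "t \<le> T" and i: "i \<in> {1..N}"
      have "\<forall>k\<in>{1..N}. \<bar>Y m t k\<bar> \<le> C \<and> \<bar>P m t k\<bar> \<le> C \<and> \<bar>Y m t k - P m t k\<bar> \<le> \<delta>"
      proof
        fix k assume k: "k \<in> {1..N}"
        show "\<bar>Y m t k\<bar> \<le> C \<and> \<bar>P m t k\<bar> \<le> C \<and> \<bar>Y m t k - P m t k\<bar> \<le> \<delta>"
          using inbox[OF t(2) k, of "Y m t"] inbox[OF t(2) k, of "P m t"] Ybox[OF t(1), of m k] Pbox[OF t, of m k]
            PY[OF t, of m k] Vh[OF m] by (auto simp: abs_minus_commute)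
      qed
      then show "\<bar>F (Y m t) i - F (P m t) i\<bar> \<le> \<epsilon>" using d(2) i by blast
    qed
  qed
  have cauchy1: "\<exists>M. \<forall>m\<ge>M. \<forall>m'\<ge>M. \<forall>t. 0 \<le> t \<longrightarrow> t \<le> T \<longrightarrow> (\<forall>i\<in>{1..N}. P m t i - P m' t i \<le> \<epsilon>)"
    if e: "\<epsilon> > 0" for \<epsilon>
  proof -
    define \<epsilon>1 where "\<epsilon>1 = \<epsilon> / (2*T)"
    have e1: "\<epsilon>1 > 0" using e T unfolding \<epsilon>1_def by auto
    obtain M where M: "\<And>m t i. m \<ge> M \<Longrightarrow> 0 \<le> t \<Longrightarrow> t \<le> T \<Longrightarrow> i\<in>{1..N} \<Longrightarrow> \<bar>F (Y m t) i - F (P m t) i\<bar> \<le> \<epsilon>1"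
      using defect[OF e1] by blast
    show ?thesis
    proof (intro exI[of _ M] allI impI ballI)
      fix m m' t i assume m: "m \<ge> M" "m' \<ge> M" and t: "0 \<le> t" "t \<le> T" and i: "i \<in> {1..N}"
      have "P m t i - P m' t i \<le> 0 + (2*\<epsilon>1) * (t - 0)"
      proof (rule cmp[where I="{1..N}" and D="\<lambda>i t. P m t i - P m' t i" and d="\<lambda>i t. F (Y m t) i - F (Y m' t) i"])
        show "continuous_on {0..T} (\<lambda>t. P m t i - P m' t i)" for i using Pcont by (intro continuous_intros)
        show "((\<lambda>t. P m t i - P m' t i) has_real_derivative F (Y m t) i - F (Y m' t) i) (at t within {t..T})"
          if "0 \<le> t" "t < T" for i t
          using Pder[OF that order.refl, of m i] Pder[OF that order.refl, of m' i] by (intro derivative_intros)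
        fix p t assume p: "p \<in> {1..N}" and t: "0 \<le> t" "t < T"
          and am: "\<And>k. k \<in> {1..N} \<Longrightarrow> P m t k - P m' t k \<le> P m t p - P m' t p"
        have "F (P m t) p \<le> F (P m' t) p" using qm[OF p] am by blast
        then show "F (Y m t) p - F (Y m' t) p \<le> 2*\<epsilon>1"
          using M[OF m(1) t(1) _ p, of] M[OF m(2) t(1) _ p] t by (auto simp: abs_le_iff)
      qed (use i t T in \<open>simp_all add: P0\<close>)
      also have "\<dots> \<le> 2*\<epsilon>1*T" using e1 t mult_left_mono[of t T "2*\<epsilon>1"] by simp
      also have "\<dots> = \<epsilon>" unfolding \<epsilon>1_def using T by simp
      finally show "P m t i - P m' t i \<le> \<epsilon>" .
    qed
  qed
  have cauchy: "\<exists>M. \<forall>m\<ge>M. \<forall>m'\<ge>M. \<forall>t. 0 \<le> t \<longrightarrow> t \<le> T \<longrightarrow> (\<forall>i\<in>{1..N}. \<bar>P m t i - P m' t i\<bar> \<le> \<epsilon>)"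
    if e: "\<epsilon> > 0" for \<epsilon>
  proof -
    obtain M where M: "\<And>m m' t i. m \<ge> M \<Longrightarrow> m' \<ge> M \<Longrightarrow> 0 \<le> t \<Longrightarrow> t \<le> T \<Longrightarrow> i\<in>{1..N} \<Longrightarrow> P m t i - P m' t i \<le> \<epsilon>"
      using cauchy1[OF e] by blast
    show ?thesis
    proof (intro exI[of _ M] allI impI ballI)
      fix m m' t i assume m: "m \<ge> M" "m' \<ge> M" and t: "0 \<le> t" "t \<le> T" and i: "i \<in> {1..N}"
      show "\<bar>P m t i - P m' t i\<bar> \<le> \<epsilon>" using M[OF m t i] M[OF m(2,1) t i] by linarith
    qed
  qed
  define Q where "Q i t = lim (\<lambda>m. P m t i)" for i t
  have conv: "(\<lambda>m. P m t i) \<longlonglongrightarrow> Q i t" if t: "0 \<le> t" "t \<le> T" and i: "i \<in> {1..N}" for t i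
  proof -
    have "Cauchy (\<lambda>m. P m t i)"
    proof (rule metric_CauchyI)
      fix e :: real assume e: "e > 0"
      obtain M where M: "\<And>m m'. m \<ge> M \<Longrightarrow> m' \<ge> M \<Longrightarrow> \<bar>P m t i - P m' t i\<bar> \<le> e/2"
        using cauchy[of "e/2"] e t i by fastforce
      show "\<exists>M. \<forall>m\<ge>M. \<forall>n\<ge>M. dist (P m t i) (P n t i) < e"
        using M e by (intro exI[of _ M]) (force simp: dist_real_def)
    qed
    then show ?thesis unfolding Q_def by (simp add: Cauchy_convergent_iff convergent_LIMSEQ_iff)
  qed
  have unif: "\<exists>M. \<forall>m\<ge>M. \<forall>t. 0 \<le> t \<longrightarrow> t \<le> T \<longrightarrow> (\<forall>i\<in>{1..N}. \<bar>P m t i - Q i t\<bar> \<le> \<epsilon>)"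
    if e: "\<epsilon> > 0" for \<epsilon>
  proof -
    obtain M where M: "\<And>m m' t i. m \<ge> M \<Longrightarrow> m' \<ge> M \<Longrightarrow> 0 \<le> t \<Longrightarrow> t \<le> T \<Longrightarrow> i\<in>{1..N} \<Longrightarrow> \<bar>P m t i - P m' t i\<bar> \<le> \<epsilon>"
      using cauchy[OF e] by blast
    show ?thesis
    proof (intro exI[of _ M] allI impI ballI)
      fix m t i assume m: "m \<ge> M" and t: "0 \<le> t" "t \<le> T" and i: "i \<in> {1..N}"
      have "(\<lambda>m'. \<bar>P m t i - P m' t i\<bar>) \<longlonglongrightarrow> \<bar>P m t i - Q i t\<bar>"
        using conv[OF t i] by (intro tendsto_intros)
      then show "\<bar>P m t i - Q i t\<bar> \<le> \<epsilon>" by (rule LIMSEQ_le_const2) (use M[OF m _ t i] in auto)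
    qed
  qed
  have Qbox: "\<bar>Q k t - q0 k\<bar> \<le> V*t" if t: "0 \<le> t" "t \<le> T" and k: "k \<in> {1..N}" for k t
  proof -
    have "(\<lambda>m. \<bar>P m t k - q0 k\<bar>) \<longlonglongrightarrow> \<bar>Q k t - q0 k\<bar>" using conv[OF t k] by (intro tendsto_intros)
    then show ?thesis by (rule LIMSEQ_le_const2) (use Pbox[OF t] in auto)
  qed
  have Q0: "Q i 0 = q0 i" if i: "i \<in> {1..N}" for i
  proof -
    have "(\<lambda>m. P m 0 i) \<longlonglongrightarrow> Q i 0" using conv[of 0 i] T i by auto
    then show ?thesis unfolding P0 by (simp add: LIMSEQ_const_iff)
  qed
  have mvP: "\<bar>P m b i - P m a i - c*(b-a)\<bar> \<le> \<eta>*(b-a)"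
    if ab: "0 \<le> a" "a \<le> b" "b \<le> T" and bd: "\<And>\<tau>. a \<le> \<tau> \<Longrightarrow> \<tau> < b \<Longrightarrow> \<bar>F (Y m \<tau>) i - c\<bar> \<le> \<eta>" for m a b i c \<eta>
  proof (rule mv_right[OF ab(2) Pcont])
    fix \<tau> assume "a \<le> \<tau>" "\<tau> < b"
    then show "((\<lambda>\<tau>. P m \<tau> i) has_real_derivative F (Y m \<tau>) i) (at \<tau> within {\<tau>..b})"
      using ab by (intro Pder) auto
  qed (rule bd)
  have Qlip: "\<bar>Q i b - Q i a\<bar> \<le> V*(b-a)" if ab: "0 \<le> a" "a \<le> b" "b \<le> T" and i: "i \<in> {1..N}" for a b i
  proof -
    have "(\<lambda>m. \<bar>P m b i - P m a i - 0*(b-a)\<bar>) \<longlonglongrightarrow> \<bar>Q i b - Q i a - 0*(b-a)\<bar>"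
      using conv[of b i] conv[of a i] ab i by (intro tendsto_intros) auto
    then have "\<bar>Q i b - Q i a - 0*(b-a)\<bar> \<le> V*(b-a)"
      by (rule LIMSEQ_le_const2) (use mvP[OF ab, of _ i 0 V] Vb in auto)
    then show ?thesis by simp
  qed
  have Qlip2: "\<bar>Q i s - Q i t\<bar> \<le> V*\<bar>s-t\<bar>" if "0 \<le> s" "s \<le> T" "0 \<le> t" "t \<le> T" "i \<in> {1..N}" for s t i
    using Qlip[of s t i] Qlip[of t s i] that by (cases "s \<le> t") (auto simp: abs_minus_commute)
  have Qder: "(Q i has_real_derivative F (\<lambda>k. Q k t) i) (at t within {0..T})"
    if i: "i \<in> {1..N}" and t: "0 \<le> t" "t \<le> T" for i t
  proof (rule deriv_eps)
    fix \<epsilon> :: real assume e: "\<epsilon> > 0"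
    define c where "c = F (\<lambda>k. Q k t) i"
    obtain \<delta>1 where d1: "\<delta>1 > 0" "\<forall>x y. (\<forall>k\<in>{1..N}. \<bar>x k\<bar> \<le> C \<and> \<bar>y k\<bar> \<le> C \<and> \<bar>x k - y k\<bar> \<le> \<delta>1)
               \<longrightarrow> (\<forall>i\<in>{1..N}. \<bar>F x i - F y i\<bar> \<le> \<epsilon>/3)" using uc[of "\<epsilon>/3"] e by auto
    define \<delta> where "\<delta> = \<delta>1 / (V+1)"
    have d: "\<delta> > 0" unfolding \<delta>_def using d1 V0 by auto
    have Vd: "V * \<delta> \<le> \<delta>1" unfolding \<delta>_def using d1 V0 by (simp add: field_simps)
    have G: "\<bar>Q i b - Q i a - c*(b-a)\<bar> \<le> \<epsilon>*(b-a)"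
      if ab: "0 \<le> a" "a \<le> b" "b \<le> T" "a \<le> t" "t \<le> b" "b - a < \<delta>" for a b
    proof -
      have e3p: "\<epsilon>/3 > 0" using e by simp
      obtain M1 where M1: "\<And>m \<tau> j. m \<ge> M1 \<Longrightarrow> 0 \<le> \<tau> \<Longrightarrow> \<tau> \<le> T \<Longrightarrow> j\<in>{1..N} \<Longrightarrow> \<bar>F (Y m \<tau>) j - F (P m \<tau>) j\<bar> \<le> \<epsilon>/3"
        using defect[OF e3p] by blast
      obtain M2 where M2: "\<And>m \<tau> j. m \<ge> M2 \<Longrightarrow> 0 \<le> \<tau> \<Longrightarrow> \<tau> \<le> T \<Longrightarrow> j\<in>{1..N} \<Longrightarrow> \<bar>P m \<tau> j - Q j \<tau>\<bar> \<le> \<delta>1"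
        using unif[OF d1(1)] by blast
      have bnd: "\<bar>P m b i - P m a i - c*(b-a)\<bar> \<le> \<epsilon>*(b-a)" if m: "m \<ge> max M1 M2" for m
      proof (rule mvP[OF ab(1-3)])
        fix \<tau> assume \<tau>: "a \<le> \<tau>" "\<tau> < b"
        have \<tau>0: "0 \<le> \<tau>" "\<tau> \<le> T" using \<tau> ab by auto
        have e1: "\<bar>F (Y m \<tau>) i - F (P m \<tau>) i\<bar> \<le> \<epsilon>/3" using M1[OF _ \<tau>0 i] m by auto
        have e2: "\<bar>F (P m \<tau>) i - F (\<lambda>k. Q k \<tau>) i\<bar> \<le> \<epsilon>/3"
        proof -
          have "\<forall>k\<in>{1..N}. \<bar>P m \<tau> k\<bar> \<le> C \<and> \<bar>Q k \<tau>\<bar> \<le> C \<and> \<bar>P m \<tau> k - Q k \<tau>\<bar> \<le> \<delta>1"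
            using inbox[OF \<tau>0(2), of _ "P m \<tau>"] inbox[OF \<tau>0(2), of _ "\<lambda>k. Q k \<tau>"] Pbox[OF \<tau>0] Qbox[OF \<tau>0]
              M2[OF _ \<tau>0] m by auto
          from mp[OF spec[OF spec[OF d1(2), of "P m \<tau>"], of "\<lambda>k. Q k \<tau>"] this] i
          show ?thesis by blast
        qed
        have e3: "\<bar>F (\<lambda>k. Q k \<tau>) i - c\<bar> \<le> \<epsilon>/3"
        proof -
          have "\<bar>Q k \<tau> - Q k t\<bar> \<le> \<delta>1" if k: "k \<in> {1..N}" for k
          proof -
            have "\<bar>Q k \<tau> - Q k t\<bar> \<le> V*\<bar>\<tau> - t\<bar>" using Qlip2[OF \<tau>0 t k] .
            also have "\<dots> \<le> V*\<delta>" using V0 \<tau> ab by (intro mult_left_mono) auto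
            finally show ?thesis using Vd by linarith
          qed
          then have "\<forall>k\<in>{1..N}. \<bar>Q k \<tau>\<bar> \<le> C \<and> \<bar>Q k t\<bar> \<le> C \<and> \<bar>Q k \<tau> - Q k t\<bar> \<le> \<delta>1"
            using inbox[OF \<tau>0(2), of _ "\<lambda>k. Q k \<tau>"] inbox[OF t(2), of _ "\<lambda>k. Q k t"] Qbox[OF \<tau>0] Qbox[OF t] by auto
          from mp[OF spec[OF spec[OF d1(2), of "\<lambda>k. Q k \<tau>"], of "\<lambda>k. Q k t"] this] i
          show ?thesis unfolding c_def by blast
        qed
        show "\<bar>F (Y m \<tau>) i - c\<bar> \<le> \<epsilon>" using e1 e2 e3 by linarith
      qed
      have "(\<lambda>m. \<bar>P m b i - P m a i - c*(b-a)\<bar>) \<longlonglongrightarrow> \<bar>Q i b - Q i a - c*(b-a)\<bar>"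
        using conv[of b i] conv[of a i] ab i by (intro tendsto_intros) auto
      then show ?thesis by (rule LIMSEQ_le_const2) (use bnd in \<open>intro exI[of _ "max M1 M2"], auto\<close>)
    qed
    show "\<exists>\<delta>>0. \<forall>s\<in>{0..T}. \<bar>s - t\<bar> < \<delta> \<longrightarrow> \<bar>Q i s - Q i t - F (\<lambda>k. Q k t) i * (s - t)\<bar> \<le> \<epsilon> * \<bar>s - t\<bar>"
    proof (intro exI[of _ \<delta>] conjI ballI impI)
      fix s assume s: "s \<in> {0..T}" "\<bar>s - t\<bar> < \<delta>"
      show "\<bar>Q i s - Q i t - F (\<lambda>k. Q k t) i * (s - t)\<bar> \<le> \<epsilon> * \<bar>s - t\<bar>"
      proof (cases "t \<le> s")
        case True then show ?thesis using G[of t s] s t unfolding c_def by auto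
      next
        case False
        then have "\<bar>Q i t - Q i s - c*(t-s)\<bar> \<le> \<epsilon>*(t-s)" using G[of s t] s t by auto
        then show ?thesis using False unfolding c_def by (simp add: abs_minus_commute algebra_simps)
      qed
    qed (rule d)
  qed
  show ?thesis
  proof (intro exI[of _ Q] ballI conjI)
    fix i t assume "i \<in> {1..N}"
    then show "Q i 0 = q0 i" by (rule Q0)
  next
    fix i t assume "i \<in> {1..N}" "t \<in> {0..T}"
    then show "(Q i has_real_derivative F (\<lambda>k. Q k t) i) (at t within {0..T})" by (intro Qder) auto
  qed
qed




locale sys =
  fixes N :: nat and \<kappa> \<alpha> :: real and g g' :: "real \<Rightarrow> real" and \<nu> :: "nat \<Rightarrow> real"
  assumes N: "N \<ge> 1" and kappa: "\<kappa> > 0" and alpha: "0 < \<alpha>" "\<alpha> < 1"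
    and g_deriv: "\<forall>x\<ge>0. (g has_real_derivative g' x) (at x within {0..})"
    and g0: "g 0 = 0"
    and g'_bounds: "\<forall>b\<ge>0. \<exists>m M. 0 < m \<and> (\<forall>x\<in>{0..b}. m \<le> g' x \<and> g' x \<le> M)"
begin

definition Fr :: "(nat \<Rightarrow> real) \<Rightarrow> nat \<Rightarrow> real" where
  "Fr x i = Gf g (\<nu> i + \<kappa> / real N * (\<Sum>k=1..N. Psi \<alpha> (x k - x i)))"

lemma g_cont: "continuous_on {0..} g"
  unfolding continuous_on_eq_continuous_within
proof
  fix x :: real assume "x \<in> {0..}"
  then show "continuous (at x within {0..}) g" using g_deriv by (intro DERIV_continuous) auto
qed

lemma g'_pos: assumes "x \<ge> 0" shows "g' x > 0"
proof -
  obtain m M where "0 < m" "\<forall>y\<in>{0..x}. m \<le> g' y \<and> g' y \<le> M" using g'_bounds assms by blast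
  then show ?thesis using assms by force
qed

lemma g_strict: assumes "0 \<le> a" "a < b" shows "g a < g b"
proof (rule DERIV_pos_imp_increasing_open[OF assms(2)])
  fix x assume x: "a < x" "x < b"
  have "(g has_real_derivative g' x) (at x within {0..})" using g_deriv x assms by auto
  then have "(g has_real_derivative g' x) (at x within {0<..})"
    by (rule has_field_derivative_subset) auto
  moreover have "at x within {0<..} = at x" using x assms by (intro at_within_open) auto
  ultimately have "(g has_real_derivative g' x) (at x)" by simp
  then show "\<exists>y. (g has_real_derivative y) (at x) \<and> y > 0" using g'_pos[of x] x assms by auto
next
  show "continuous_on {a..b} g" using assms by (intro continuous_on_subset[OF g_cont]) auto
qed

lemma g_mono: "0 \<le> a \<Longrightarrow> a \<le> b \<Longrightarrow> g a \<le> g b"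
  using g_strict by (cases "a = b") (auto intro: less_imp_le)

lemma g_nonneg: "0 \<le> x \<Longrightarrow> 0 \<le> g x"
  using g_mono[of 0 x] g0 by auto

lemma G_alt: "Gf g p = g (max p 0) - g (max (-p) 0)"
  unfolding Gf_def using g0 by (cases "p > 0"; cases "p = 0") (auto simp: max_def)

lemma G_cont: "continuous_on S (Gf g)"
proof -
  have "continuous_on S (\<lambda>p. g (max p 0) - g (max (-p) 0))"
    by (intro continuous_intros continuous_on_compose2[OF g_cont]) auto
  then show ?thesis unfolding G_alt[abs_def] .
qed

lemma G_strict: assumes pq: "p < q" shows "Gf g p < Gf g q"
proof -
  have a: "g (max p 0) \<le> g (max q 0)" using pq by (intro g_mono) auto
  have b: "g (max (-q) 0) \<le> g (max (-p) 0)" using pq by (intro g_mono) auto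
  show ?thesis
  proof (cases "q > 0")
    case True
    then have "g (max p 0) < g (max q 0)" using pq by (intro g_strict) auto
    then show ?thesis unfolding G_alt using b by linarith
  next
    case False
    then have "g (max (-q) 0) < g (max (-p) 0)" using pq by (intro g_strict) auto
    then show ?thesis unfolding G_alt using a by linarith
  qed
qed

lemma G_mono: "p \<le> q \<Longrightarrow> Gf g p \<le> Gf g q"
  using G_strict by (cases "p = q") (auto intro: less_imp_le)

lemma G_inj: "Gf g p = Gf g q \<longleftrightarrow> p = q"
  using G_strict by (metis less_irrefl linorder_neqE)

lemma G_pos: "p \<ge> 0 \<Longrightarrow> Gf g p = g p"
  unfolding G_alt using g0 by (simp add: max_def)

lemma G_neg: "Gf g (-p) = - Gf g p"
  unfolding G_alt by simp

lemma Psi_alt: "Psi \<alpha> r = ((max r 0) powr (1-\<alpha>) - (max (-r) 0) powr (1-\<alpha>)) / (1-\<alpha>)"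
  unfolding Psi_def by (cases "r > 0"; cases "r = 0") (auto simp: max_def sgn_if)

lemma Psi_cont: "continuous_on S (Psi \<alpha>)"
proof -
  have "continuous_on S (\<lambda>r. ((max r 0) powr (1-\<alpha>) - (max (-r) 0) powr (1-\<alpha>)) / (1-\<alpha>))"
    using alpha by (intro continuous_intros continuous_on_powr') auto
  then show ?thesis unfolding Psi_alt[abs_def] .
qed

lemma Psi_mono: assumes "x \<le> y" shows "Psi \<alpha> x \<le> Psi \<alpha> y"
proof -
  have "(max x 0) powr (1-\<alpha>) \<le> (max y 0) powr (1-\<alpha>)" using assms alpha by (intro powr_mono2) auto
  moreover have "(max (-y) 0) powr (1-\<alpha>) \<le> (max (-x) 0) powr (1-\<alpha>)" using assms alpha by (intro powr_mono2) auto
  ultimately show ?thesis unfolding Psi_alt using alpha by (intro divide_right_mono) auto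
qed

lemma Psi_odd: "Psi \<alpha> (-r) = - Psi \<alpha> r"
  unfolding Psi_alt by (simp only: minus_divide_left minus_diff_eq minus_minus)

lemma Psi_0: "Psi \<alpha> 0 = 0"
  unfolding Psi_alt by simp

lemma Psi_abs: "\<bar>r\<bar> \<le> R \<Longrightarrow> \<bar>Psi \<alpha> r\<bar> \<le> Psi \<alpha> R"
  using Psi_mono[of r R] Psi_mono[of "-R" r] Psi_odd[of R] by (auto simp: abs_le_iff)

lemma rhs_Fr: "rhs g \<kappa> \<alpha> N \<nu> Q i t = Fr (\<lambda>k. Q k t) i"
  unfolding rhs_def Fr_def by simp

lemma Fr_cong: "(\<And>k. k \<in> {1..N} \<Longrightarrow> x k = y k) \<Longrightarrow> i \<in> {1..N} \<Longrightarrow> Fr x i = Fr y i"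
  unfolding Fr_def by (intro arg_cong[where f="Gf g"] arg_cong2[where f="(+)"] arg_cong2[where f="(*)"] refl sum.cong) auto

lemma sum_le_psi: "(\<And>k. k \<in> {1..N} \<Longrightarrow> u k \<le> v k) \<Longrightarrow>
   \<kappa> / real N * (\<Sum>k=1..N. Psi \<alpha> (u k)) \<le> \<kappa> / real N * (\<Sum>k=1..N. Psi \<alpha> (v k))"
  using kappa by (intro mult_left_mono sum_mono Psi_mono) auto

lemma Fr_qm: assumes "p \<in> {1..N}" "\<forall>k\<in>{1..N}. x k - y k \<le> x p - y p" shows "Fr x p \<le> Fr y p"
proof -
  have "x k - x p \<le> y k - y p" if "k \<in> {1..N}" for k using bspec[OF assms(2) that] by linarith
  then show ?thesis unfolding Fr_def using assms by (intro G_mono add_left_mono sum_le_psi) auto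
qed

lemma Fr_pair: assumes "\<nu> i = \<nu> j" "x j \<le> x i" shows "Fr x i \<le> Fr x j"
  unfolding Fr_def using assms by (intro G_mono add_mono sum_le_psi) auto

lemma Fr_same: assumes "x i = x j"
  shows "Fr x i = Fr x j \<longleftrightarrow> \<nu> i = \<nu> j" and "\<nu> j < \<nu> i \<Longrightarrow> Fr x j < Fr x i"
proof -
  have S: "(\<Sum>k=1..N. Psi \<alpha> (x k - x i)) = (\<Sum>k=1..N. Psi \<alpha> (x k - x j))" using assms by simp
  show "Fr x i = Fr x j \<longleftrightarrow> \<nu> i = \<nu> j" unfolding Fr_def S G_inj by simp
  show "\<nu> j < \<nu> i \<Longrightarrow> Fr x j < Fr x i" unfolding Fr_def S by (intro G_strict) simp
qed

lemma Fr_cont: "continuous_on S (\<lambda>t. Fr (\<lambda>k. X k t) i)" if "\<And>k. k \<in> {1..N} \<Longrightarrow> continuous_on S (X k)" "i \<in> {1..N}"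
proof -
  have c1: "continuous_on S (\<lambda>t. Psi \<alpha> (X k t - X i t))" if "k \<in> {1..N}" for k
    by (rule continuous_on_compose2[OF Psi_cont[of UNIV]]) (use that \<open>i \<in> {1..N}\<close> \<open>\<And>k. k \<in> {1..N} \<Longrightarrow> continuous_on S (X k)\<close> in \<open>auto intro!: continuous_intros\<close>)
  have "continuous_on S (\<lambda>t. \<nu> i + \<kappa> / real N * (\<Sum>k=1..N. Psi \<alpha> (X k t - X i t)))"
    using c1 by (intro continuous_intros) auto
  then show ?thesis unfolding Fr_def by (rule continuous_on_compose2[OF G_cont[of UNIV]]) auto
qed

end



lemma deriv_cont_on:
  fixes f :: "real \<Rightarrow> real"
  assumes "\<And>t. t \<in> S \<Longrightarrow> (f has_real_derivative f' t) (at t within S)"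
  shows "continuous_on S f"
  unfolding continuous_on_eq_continuous_within using assms DERIV_continuous by blast

lemma clamp_lip: "\<bar>max (-B) (min B a) - max (-B) (min B b)\<bar> \<le> \<bar>a - b\<bar>" for B a b :: real
  by (auto simp: abs_le_iff abs_if max_def min_def)

context sys begin

lemma uniq1:
  assumes T: "T \<ge> 0"
    and init: "\<And>i. i \<in> {1..N} \<Longrightarrow> Q i 0 = Q' i 0"
    and dQ: "\<And>i t. i \<in> {1..N} \<Longrightarrow> t \<in> {0..T} \<Longrightarrow> (Q i has_real_derivative Fr (\<lambda>k. Q k t) i) (at t within {0..T})"
    and dQ': "\<And>i t. i \<in> {1..N} \<Longrightarrow> t \<in> {0..T} \<Longrightarrow> (Q' i has_real_derivative Fr (\<lambda>k. Q' k t) i) (at t within {0..T})"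
    and i: "i \<in> {1..N}" and t: "t \<in> {0..T}"
  shows "Q i t - Q' i t \<le> 0"
proof -
  have "Q i t - Q' i t \<le> 0 + 0 * (t - 0)"
  proof (rule cmp[where I="{1..N}" and D="\<lambda>i t. Q i t - Q' i t" and d="\<lambda>i t. Fr (\<lambda>k. Q k t) i - Fr (\<lambda>k. Q' k t) i"])
    show "continuous_on {0..T} (\<lambda>t. Q i t - Q' i t)" if "i \<in> {1..N}" for i
      using deriv_cont_on[of "{0..T}" "Q i", OF dQ[OF that]] deriv_cont_on[of "{0..T}" "Q' i", OF dQ'[OF that]]
      by (intro continuous_intros) auto
    show "((\<lambda>t. Q i t - Q' i t) has_real_derivative Fr (\<lambda>k. Q k t) i - Fr (\<lambda>k. Q' k t) i) (at t within {t..T})"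
      if "i \<in> {1..N}" "0 \<le> t" "t < T" for i t
    proof -
      have "((\<lambda>t. Q i t - Q' i t) has_real_derivative Fr (\<lambda>k. Q k t) i - Fr (\<lambda>k. Q' k t) i) (at t within {0..T})"
        using dQ[OF that(1)] dQ'[OF that(1)] that by (intro derivative_intros) auto
      then show ?thesis by (rule has_field_derivative_subset) (use that in auto)
    qed
    fix p t assume p: "p \<in> {1..N}" and "0 \<le> t" "t < T"
      and am: "\<And>k. k \<in> {1..N} \<Longrightarrow> Q k t - Q' k t \<le> Q p t - Q' p t"
    show "Fr (\<lambda>k. Q k t) p - Fr (\<lambda>k. Q' k t) p \<le> 0" using Fr_qm[OF p, of "\<lambda>k. Q k t" "\<lambda>k. Q' k t"] am by auto
  qed (use T i t init in auto)
  then show ?thesis by simp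
qed

lemma uniqT:
  assumes T: "T \<ge> 0"
    and init: "\<And>i. i \<in> {1..N} \<Longrightarrow> Q i 0 = Q' i 0"
    and dQ: "\<And>i t. i \<in> {1..N} \<Longrightarrow> t \<in> {0..T} \<Longrightarrow> (Q i has_real_derivative Fr (\<lambda>k. Q k t) i) (at t within {0..T})"
    and dQ': "\<And>i t. i \<in> {1..N} \<Longrightarrow> t \<in> {0..T} \<Longrightarrow> (Q' i has_real_derivative Fr (\<lambda>k. Q' k t) i) (at t within {0..T})"
    and i: "i \<in> {1..N}" and t: "t \<in> {0..T}"
  shows "Q i t = Q' i t"
  using uniq1[OF T init dQ dQ' i t] uniq1[of T Q' Q, OF T _ dQ' dQ i t] init by force

end



context sys begin

lemma solT:
  fixes q0 :: "nat \<Rightarrow> real"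
  assumes T: "T > 0"
  shows "\<exists>Q. \<forall>i\<in>{1..N}. Q i 0 = q0 i \<and>
            (\<forall>t\<in>{0..T}. (Q i has_real_derivative Fr (\<lambda>k. Q k t) i) (at t within {0..T}))"
proof -
  define A where "A = (\<Sum>k=1..N. \<bar>\<nu> k\<bar>)"
  define Cq where "Cq = (\<Sum>k=1..N. \<bar>q0 k\<bar>)"
  define W where "W = g A"
  define R where "R = 2*(Cq + W*T)"
  define B where "B = A + \<kappa> * Psi \<alpha> R + 1"
  define GB where "GB p = Gf g (max (-B) (min B p))" for p
  define FB where "FB x i = GB (\<nu> i + \<kappa> / real N * (\<Sum>k=1..N. Psi \<alpha> (x k - x i)))" for x i
  define V where "V = g B"
  define C where "C = Cq + V*T"
  have A0: "A \<ge> 0" unfolding A_def by (auto intro: sum_nonneg)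
  have Cq0: "Cq \<ge> 0" unfolding Cq_def by (auto intro: sum_nonneg)
  have nuA: "\<bar>\<nu> i\<bar> \<le> A" if "i \<in> {1..N}" for i
    unfolding A_def by (rule member_le_sum) (use that in auto)
  have q0C: "\<bar>q0 i\<bar> \<le> Cq" if "i \<in> {1..N}" for i
    unfolding Cq_def by (rule member_le_sum) (use that in auto)
  have W0: "W \<ge> 0" unfolding W_def by (rule g_nonneg[OF A0])
  have R0: "R \<ge> 0" unfolding R_def using W0 Cq0 T by auto
  have PsiR: "Psi \<alpha> R \<ge> 0" using Psi_mono[OF R0] Psi_0 by auto
  have "\<kappa> * Psi \<alpha> R \<ge> 0" using PsiR kappa by simp
  then have AB: "A < B" unfolding B_def by simp
  have B0: "B > 0" using A0 AB by auto
  have V0: "V \<ge> 0" unfolding V_def using B0 by (intro g_nonneg) auto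
  have GBmono: "GB p \<le> GB q" if "p \<le> q" for p q
    unfolding GB_def using that by (intro G_mono) auto
  have GBb: "\<bar>GB p\<bar> \<le> V" for p
  proof -
    have "Gf g (-B) \<le> GB p" "GB p \<le> Gf g B" unfolding GB_def using B0 by (auto intro!: G_mono)
    moreover have "Gf g B = V" "Gf g (-B) = - V" unfolding V_def using B0 G_pos G_neg by auto
    ultimately show ?thesis by auto
  qed
  have GBid: "GB p = Gf g p" if "\<bar>p\<bar> \<le> B" for p unfolding GB_def using that by (simp add: abs_le_iff)
  have qmB: "FB x p \<le> FB y p" if p: "p \<in> {1..N}" and am: "\<forall>k\<in>{1..N}. x k - y k \<le> x p - y p" for x y p
  proof -
    have "x k - x p \<le> y k - y p" if "k \<in> {1..N}" for k using bspec[OF am that] by linarith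
    then show ?thesis unfolding FB_def using p by (intro GBmono add_left_mono sum_le_psi) auto
  qed
  have ucB: "\<exists>\<delta>>0. \<forall>x y. (\<forall>k\<in>{1..N}. \<bar>x k\<bar> \<le> C \<and> \<bar>y k\<bar> \<le> C \<and> \<bar>x k - y k\<bar> \<le> \<delta>)
               \<longrightarrow> (\<forall>i\<in>{1..N}. \<bar>FB x i - FB y i\<bar> \<le> \<epsilon>)" if e: "\<epsilon> > 0" for \<epsilon>
  proof -
    have "uniformly_continuous_on {-B..B} (Gf g)"
      by (rule compact_uniformly_continuous[OF G_cont]) auto
    then obtain dG where dG: "dG > 0" "\<And>a b. a \<in> {-B..B} \<Longrightarrow> b \<in> {-B..B} \<Longrightarrow> dist b a < dG \<Longrightarrow> dist (Gf g b) (Gf g a) < \<epsilon>"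
      unfolding uniformly_continuous_on_def using e by metis
    define \<epsilon>1 where "\<epsilon>1 = dG / (\<kappa> + 1)"
    have e1: "\<epsilon>1 > 0" unfolding \<epsilon>1_def using dG kappa by auto
    have ke1: "\<kappa> * \<epsilon>1 < dG" unfolding \<epsilon>1_def using dG kappa by (simp add: field_simps)
    have "uniformly_continuous_on {-(2*C)..2*C} (Psi \<alpha>)"
      by (rule compact_uniformly_continuous[OF Psi_cont]) auto
    then obtain dP where dP: "dP > 0" "\<And>a b. a \<in> {-(2*C)..2*C} \<Longrightarrow> b \<in> {-(2*C)..2*C} \<Longrightarrow> dist b a < dP \<Longrightarrow> dist (Psi \<alpha> b) (Psi \<alpha> a) < \<epsilon>1"
      unfolding uniformly_continuous_on_def using e1 by metis
    show ?thesis
    proof (intro exI[of _ "dP/3"] conjI allI impI ballI)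
      show "dP/3 > 0" using dP by simp
      fix x y i assume H: "\<forall>k\<in>{1..N}. \<bar>x k\<bar> \<le> C \<and> \<bar>y k\<bar> \<le> C \<and> \<bar>x k - y k\<bar> \<le> dP/3" and i: "i \<in> {1..N}"
      have ps: "\<bar>Psi \<alpha> (x k - x i) - Psi \<alpha> (y k - y i)\<bar> \<le> \<epsilon>1" if k: "k \<in> {1..N}" for k
      proof -
        have "\<bar>x k\<bar> \<le> C" "\<bar>y k\<bar> \<le> C" "\<bar>x k - y k\<bar> \<le> dP/3" "\<bar>x i\<bar> \<le> C" "\<bar>y i\<bar> \<le> C" "\<bar>x i - y i\<bar> \<le> dP/3"
          using H k i by auto
        then have "x k - x i \<in> {-(2*C)..2*C}" "y k - y i \<in> {-(2*C)..2*C}" "dist (y k - y i) (x k - x i) < dP"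
          using dP(1) unfolding dist_real_def atLeastAtMost_iff abs_le_iff abs_less_iff by linarith+
        from dP(2)[OF this] show ?thesis by (simp add: dist_real_def abs_minus_commute)
      qed
      have "\<bar>(\<Sum>k=1..N. Psi \<alpha> (x k - x i)) - (\<Sum>k=1..N. Psi \<alpha> (y k - y i))\<bar> \<le> (\<Sum>k=1..N. \<bar>Psi \<alpha> (x k - x i) - Psi \<alpha> (y k - y i)\<bar>)"
        unfolding sum_subtractf[symmetric] by (rule sum_abs)
      also have "\<dots> \<le> (\<Sum>k=1..N. \<epsilon>1)" using ps by (intro sum_mono) auto
      also have "\<dots> = real N * \<epsilon>1" by simp
      finally have sd: "\<bar>(\<Sum>k=1..N. Psi \<alpha> (x k - x i)) - (\<Sum>k=1..N. Psi \<alpha> (y k - y i))\<bar> \<le> real N * \<epsilon>1" .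
      define a where "a = \<nu> i + \<kappa> / real N * (\<Sum>k=1..N. Psi \<alpha> (x k - x i))"
      define b where "b = \<nu> i + \<kappa> / real N * (\<Sum>k=1..N. Psi \<alpha> (y k - y i))"
      have "\<bar>a - b\<bar> = \<bar>\<kappa> / real N * ((\<Sum>k=1..N. Psi \<alpha> (x k - x i)) - (\<Sum>k=1..N. Psi \<alpha> (y k - y i)))\<bar>"
        unfolding a_def b_def by (simp only: right_diff_distrib add_diff_add)
      also have "\<dots> = \<kappa> / real N * \<bar>(\<Sum>k=1..N. Psi \<alpha> (x k - x i)) - (\<Sum>k=1..N. Psi \<alpha> (y k - y i))\<bar>"
        using kappa by (simp add: abs_mult)
      also have "\<dots> \<le> \<kappa> / real N * (real N * \<epsilon>1)" using sd kappa by (intro mult_left_mono) auto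
      also have "\<dots> = \<kappa> * \<epsilon>1" using N by simp
      finally have ab: "\<bar>a - b\<bar> < dG" using ke1 by linarith
      have "\<bar>max (-B) (min B a) - max (-B) (min B b)\<bar> < dG" using clamp_lip[of B a b] ab by linarith
      then have "dist (Gf g (max (-B) (min B a))) (Gf g (max (-B) (min B b))) < \<epsilon>"
        using B0 by (intro dG(2)) (auto simp: dist_real_def)
      then show "\<bar>FB x i - FB y i\<bar> \<le> \<epsilon>" unfolding FB_def GB_def a_def[symmetric] b_def[symmetric]
        by (simp add: dist_real_def)
    qed
  qed
  obtain Q where Q: "\<And>i. i \<in> {1..N} \<Longrightarrow> Q i 0 = q0 i"
    "\<And>i t. i \<in> {1..N} \<Longrightarrow> t \<in> {0..T} \<Longrightarrow> (Q i has_real_derivative FB (\<lambda>k. Q k t) i) (at t within {0..T})"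
  proof -
    have "\<exists>Q. \<forall>i\<in>{1..N}. Q i 0 = q0 i \<and>
            (\<forall>t\<in>{0..T}. (Q i has_real_derivative FB (\<lambda>k. Q k t) i) (at t within {0..T}))"
    proof (rule ex_sol[OF T V0, of FB N q0 C])
      show "\<bar>FB x i\<bar> \<le> V" for x i unfolding FB_def by (rule GBb)
      show "\<bar>q0 k\<bar> + V * T \<le> C" if "k \<in> {1..N}" for k unfolding C_def using q0C[OF that] by simp
    qed (use ucB qmB in auto)
    then show ?thesis using that by blast
  qed
  have contQ: "continuous_on {0..T} (Q i)" if "i \<in> {1..N}" for i
    by (rule deriv_cont_on[of _ _ "\<lambda>t. FB (\<lambda>k. Q k t) i"]) (rule Q(2)[OF that])
  have dQT: "(Q i has_real_derivative FB (\<lambda>k. Q k t) i) (at t within {t..T})" if "i \<in> {1..N}" "0 \<le> t" "t < T" for i t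
    by (rule has_field_derivative_subset[OF Q(2)[OF that(1), of t]]) (use that in auto)
  have GA1: "GB A = W"
  proof -
    have "GB A = Gf g A" using AB A0 by (intro GBid) auto
    then show ?thesis unfolding W_def using G_pos[OF A0] by simp
  qed
  have GA2: "GB (-A) = - W"
  proof -
    have "GB (-A) = Gf g (-A)" using AB A0 by (intro GBid) auto
    then show ?thesis unfolding W_def using G_pos[OF A0] G_neg[of A] by simp
  qed
  note GA = GA1 GA2
  have q0C': "Q i 0 \<le> Cq" "- Q i 0 \<le> Cq" if "i \<in> {1..N}" for i
    using q0C[OF that] Q(1)[OF that] by (simp_all add: abs_le_iff)
  have up: "Q i t \<le> Cq + W*(t-0)" if i: "i \<in> {1..N}" and t: "0 \<le> t" "t \<le> T" for i t
  proof (rule cmp[where I="{1..N}" and D="Q" and d="\<lambda>i t. FB (\<lambda>k. Q k t) i", OF _ _ contQ dQT _ _ i t])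
    fix p t assume p: "p \<in> {1..N}" and "0 \<le> t" "t < T" and am: "\<And>k. k \<in> {1..N} \<Longrightarrow> Q k t \<le> Q p t"
    have "\<kappa> / real N * (\<Sum>k=1..N. Psi \<alpha> (Q k t - Q p t)) \<le> \<kappa> / real N * (\<Sum>k=1..N. Psi \<alpha> 0)"
      using am by (intro sum_le_psi) auto
    then have "\<nu> p + \<kappa> / real N * (\<Sum>k=1..N. Psi \<alpha> (Q k t - Q p t)) \<le> A"
      using nuA[OF p] Psi_0 by (auto simp: abs_le_iff)
    then show "FB (\<lambda>k. Q k t) p \<le> W" unfolding FB_def GA(1)[symmetric] by (intro GBmono) simp
  qed (use T q0C' in simp_all)
  have lo: "- Q i t \<le> Cq + W*(t-0)" if i: "i \<in> {1..N}" and t: "0 \<le> t" "t \<le> T" for i t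
  proof (rule cmp[where I="{1..N}" and D="\<lambda>i t. - Q i t" and d="\<lambda>i t. - FB (\<lambda>k. Q k t) i", OF _ _ _ _ _ _ i t])
    show "continuous_on {0..T} (\<lambda>t. - Q i t)" if "i \<in> {1..N}" for i using contQ[OF that] by (intro continuous_intros)
    show "((\<lambda>t. - Q i t) has_real_derivative - FB (\<lambda>k. Q k t) i) (at t within {t..T})"
      if "i \<in> {1..N}" "0 \<le> t" "t < T" for i t using dQT[OF that] by (intro derivative_intros)
    fix p t assume p: "p \<in> {1..N}" and "0 \<le> t" "t < T" and am: "\<And>k. k \<in> {1..N} \<Longrightarrow> - Q k t \<le> - Q p t"
    have "\<kappa> / real N * (\<Sum>k=1..N. Psi \<alpha> 0) \<le> \<kappa> / real N * (\<Sum>k=1..N. Psi \<alpha> (Q k t - Q p t))"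
      using am by (intro sum_le_psi) force
    then have "- A \<le> \<nu> p + \<kappa> / real N * (\<Sum>k=1..N. Psi \<alpha> (Q k t - Q p t))"
      using nuA[OF p] Psi_0 by (auto simp: abs_le_iff)
    then have "GB (-A) \<le> FB (\<lambda>k. Q k t) p" unfolding FB_def by (intro GBmono) simp
    then show "- FB (\<lambda>k. Q k t) p \<le> W" using GA by simp
  qed (use T q0C' in simp_all)
  have FBFr: "FB (\<lambda>k. Q k t) i = Fr (\<lambda>k. Q k t) i" if i: "i \<in> {1..N}" and t: "0 \<le> t" "t \<le> T" for i t
  proof -
    have WT: "W * t \<le> W * T" using W0 t by (intro mult_left_mono) auto
    have ps: "\<bar>Psi \<alpha> (Q k t - Q i t)\<bar> \<le> Psi \<alpha> R" if k: "k \<in> {1..N}" for k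
    proof (rule Psi_abs)
      show "\<bar>Q k t - Q i t\<bar> \<le> R" using up[OF k t] lo[OF k t] up[OF i t] lo[OF i t] WT unfolding R_def
        by (simp add: abs_le_iff)
    qed
    have "\<bar>\<Sum>k=1..N. Psi \<alpha> (Q k t - Q i t)\<bar> \<le> (\<Sum>k=1..N. \<bar>Psi \<alpha> (Q k t - Q i t)\<bar>)" by (rule sum_abs)
    also have "\<dots> \<le> (\<Sum>k=1..N. Psi \<alpha> R)" using ps by (intro sum_mono) auto
    finally have "\<bar>\<Sum>k=1..N. Psi \<alpha> (Q k t - Q i t)\<bar> \<le> real N * Psi \<alpha> R" by simp
    then have "\<kappa> / real N * \<bar>\<Sum>k=1..N. Psi \<alpha> (Q k t - Q i t)\<bar> \<le> \<kappa> / real N * (real N * Psi \<alpha> R)"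
      using kappa by (intro mult_left_mono) auto
    also have "\<dots> = \<kappa> * Psi \<alpha> R" using N by simp
    finally have "\<bar>\<kappa> / real N * (\<Sum>k=1..N. Psi \<alpha> (Q k t - Q i t))\<bar> \<le> \<kappa> * Psi \<alpha> R"
      using kappa by (simp add: abs_mult)
    then have "\<bar>\<nu> i + \<kappa> / real N * (\<Sum>k=1..N. Psi \<alpha> (Q k t - Q i t))\<bar> \<le> B"
      using nuA[OF i] abs_triangle_ineq[of "\<nu> i" "\<kappa> / real N * (\<Sum>k=1..N. Psi \<alpha> (Q k t - Q i t))"]
      unfolding B_def by linarith
    then show ?thesis unfolding FB_def Fr_def by (rule GBid)
  qed
  show ?thesis
  proof (intro exI[of _ Q] ballI conjI)
    fix i assume i: "i \<in> {1..N}"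
    show "Q i 0 = q0 i" using Q(1)[OF i] .
    fix t assume t: "t \<in> {0..T}"
    show "(Q i has_real_derivative Fr (\<lambda>k. Q k t) i) (at t within {0..T})"
      using Q(2)[OF i t] FBFr[OF i] t by auto
  qed
qed

end



context sys begin

definition Qn :: "(nat \<Rightarrow> real) \<Rightarrow> nat \<Rightarrow> nat \<Rightarrow> real \<Rightarrow> real" where
  "Qn q0 n = (SOME Q. \<forall>i\<in>{1..N}. Q i 0 = q0 i \<and>
     (\<forall>t\<in>{0..real n + 1}. (Q i has_real_derivative Fr (\<lambda>k. Q k t) i) (at t within {0..real n + 1})))"

definition Qg :: "(nat \<Rightarrow> real) \<Rightarrow> nat \<Rightarrow> real \<Rightarrow> real" where
  "Qg q0 i t = Qn q0 (nat \<lceil>t\<rceil>) i t"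

lemma Qn_prop:
  "\<forall>i\<in>{1..N}. Qn q0 n i 0 = q0 i \<and>
     (\<forall>t\<in>{0..real n + 1}. (Qn q0 n i has_real_derivative Fr (\<lambda>k. Qn q0 n k t) i) (at t within {0..real n + 1}))"
proof -
  have "real n + 1 > 0" by simp
  from solT[OF this, of q0] show ?thesis unfolding Qn_def by (rule someI_ex)
qed

lemma Qn_0: "i \<in> {1..N} \<Longrightarrow> Qn q0 n i 0 = q0 i"
  using Qn_prop[of q0 n] by blast

lemma Qn_d: "i \<in> {1..N} \<Longrightarrow> t \<in> {0..real n + 1} \<Longrightarrow>
   (Qn q0 n i has_real_derivative Fr (\<lambda>k. Qn q0 n k t) i) (at t within {0..real n + 1})"
  using Qn_prop[of q0 n] by blast

lemma Qn_agree:
  assumes i: "i \<in> {1..N}" and t: "0 \<le> t" "t \<le> real n + 1" "t \<le> real m + 1"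
  shows "Qn q0 n i t = Qn q0 m i t"
proof -
  define T where "T = min (real n + 1) (real m + 1)"
  have sub1: "{0..T} \<subseteq> {0..real n + 1}" "{0..T} \<subseteq> {0..real m + 1}" unfolding T_def by auto
  have T0: "T \<ge> 0" unfolding T_def by simp
  have tT: "t \<in> {0..T}" using t unfolding T_def by simp
  show ?thesis
  proof (rule uniqT[of T "Qn q0 n" "Qn q0 m", OF T0 _ _ _ i tT])
    show "Qn q0 n i 0 = Qn q0 m i 0" if "i \<in> {1..N}" for i using Qn_0[OF that] by simp
    show "(Qn q0 n i has_real_derivative Fr (\<lambda>k. Qn q0 n k t) i) (at t within {0..T})" if "i \<in> {1..N}" "t \<in> {0..T}" for i t
      by (rule has_field_derivative_subset[OF Qn_d[OF that(1)] sub1(1)]) (use that sub1 in blast)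
    show "(Qn q0 m i has_real_derivative Fr (\<lambda>k. Qn q0 m k t) i) (at t within {0..T})" if "i \<in> {1..N}" "t \<in> {0..T}" for i t
      by (rule has_field_derivative_subset[OF Qn_d[OF that(1)] sub1(2)]) (use that sub1 in blast)
  qed
qed

lemma Qg_eq:
  assumes i: "i \<in> {1..N}" and t: "0 \<le> t" "t \<le> real n + 1"
  shows "Qg q0 i t = Qn q0 n i t"
proof -
  have "t \<le> real (nat \<lceil>t\<rceil>) + 1" using t by linarith
  then show ?thesis unfolding Qg_def by (rule Qn_agree[OF i t(1) _ t(2)])
qed

lemma Qg_deriv:
  assumes i: "i \<in> {1..N}" and t: "0 \<le> t"
  shows "(Qg q0 i has_real_derivative Fr (\<lambda>k. Qg q0 k t) i) (at t within {0..})"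
proof -
  define n where "n = nat \<lceil>t\<rceil>"
  have tn: "t < real n + 1" unfolding n_def by linarith
  have d: "(Qn q0 n i has_real_derivative Fr (\<lambda>k. Qn q0 n k t) i) (at t within {0..real n + 1})"
    using Qn_d[OF i, of t n] t tn by auto
  have "at t within {0..real n + 1} = at t within {0..}"
    by (rule at_within_nhd[of _ "{..<real n + 1}"]) (use tn in auto)
  then have d2: "(Qn q0 n i has_real_derivative Fr (\<lambda>k. Qn q0 n k t) i) (at t within {0..})" using d by simp
  have "Fr (\<lambda>k. Qn q0 n k t) i = Fr (\<lambda>k. Qg q0 k t) i"
    using Qg_eq[of _ t n] t tn i by (intro Fr_cong) auto
  then have d3: "(Qn q0 n i has_real_derivative Fr (\<lambda>k. Qg q0 k t) i) (at t within {0..})" using d2 by simp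
  have e: "real n + 1 - t > 0" using tn by simp
  show ?thesis
  proof (rule has_field_derivative_transform_within[OF d3 e])
    fix s assume "s \<in> {0..}" "dist s t < real n + 1 - t"
    then show "Qn q0 n i s = Qg q0 i s" using Qg_eq[OF i, of s n] by (auto simp: dist_real_def)
  qed (use t in auto)
qed

lemma Qg_0: "i \<in> {1..N} \<Longrightarrow> Qg q0 i 0 = q0 i"
  unfolding Qg_def using Qn_0[of i q0 0] by simp

lemma Qg_cont: "i \<in> {1..N} \<Longrightarrow> continuous_on {0..} (Qg q0 i)"
  by (rule deriv_cont_on[of _ _ "\<lambda>t. Fr (\<lambda>k. Qg q0 k t) i"]) (rule Qg_deriv, auto)

lemma not_bot: "t \<ge> 0 \<Longrightarrow> at t within {0..} \<noteq> (bot :: real filter)"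
proof -
  assume t: "t \<ge> 0"
  have "t islimpt {t..t+1}" by simp
  then have "t islimpt {0..}" by (rule islimpt_subset) (use t in auto)
  then show ?thesis by (simp add: trivial_limit_within)
qed

lemma vel_eq:
  assumes "(f has_real_derivative y) (at t within {0..})" "t \<ge> 0"
  shows "vel f t = y"
  unfolding vel_def using assms
  by (intro vector_derivative_within not_bot) (auto simp: has_real_derivative_iff_has_vector_derivative)

lemma Qg_vel: "i \<in> {1..N} \<Longrightarrow> t \<ge> 0 \<Longrightarrow> vel (Qg q0 i) t = Fr (\<lambda>k. Qg q0 k t) i"
  by (rule vel_eq[OF Qg_deriv])

lemma Qg_classical: "is_classical_solution g \<kappa> \<alpha> N q0 \<nu> (Qg q0)"
  unfolding is_classical_solution_def
proof (intro ballI conjI allI impI)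
  fix i assume i: "i \<in> {1..N}"
  show "Qg q0 i 0 = q0 i" using Qg_0[OF i] .
  show "(Qg q0 i has_real_derivative rhs g \<kappa> \<alpha> N \<nu> (Qg q0) i t) (at t within {0..})" if "t \<ge> 0" for t
    unfolding rhs_Fr using Qg_deriv[OF i that] .
  have "continuous_on {0..} (\<lambda>t. Fr (\<lambda>k. Qg q0 k t) i)" using Qg_cont i by (intro Fr_cont) auto
  then show "continuous_on {0..} (vel (Qg q0 i))"
    by (rule continuous_on_eq) (use Qg_vel[OF i] in auto)
qed

lemma Qg_unique:
  assumes Q': "is_classical_solution g \<kappa> \<alpha> N q0 \<nu> Q'" and i: "i \<in> {1..N}" and t: "t \<ge> 0"
  shows "Q' i t = Qg q0 i t"
proof -
  have Q'0: "Q' i 0 = q0 i" if "i \<in> {1..N}" for i using Q' that unfolding is_classical_solution_def by blast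
  have Q'd: "(Q' i has_real_derivative Fr (\<lambda>k. Q' k s) i) (at s within {0..})" if "i \<in> {1..N}" "s \<ge> 0" for i s
  proof -
    have "\<forall>t\<ge>0. (Q' i has_real_derivative rhs g \<kappa> \<alpha> N \<nu> Q' i t) (at t within {0..})"
      using Q' that(1) unfolding is_classical_solution_def by blast
    then show ?thesis using that(2) unfolding rhs_Fr by blast
  qed
  have tt: "t \<in> {0..t}" using t by simp
  show ?thesis
  proof (rule uniqT[of t Q' "Qg q0", OF t _ _ _ i tt])
    show "Q' i 0 = Qg q0 i 0" if "i \<in> {1..N}" for i using Q'0[OF that] Qg_0[OF that] by simp
    show "(Q' i has_real_derivative Fr (\<lambda>k. Q' k s) i) (at s within {0..t})" if "i \<in> {1..N}" "s \<in> {0..t}" for i s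
      by (rule has_field_derivative_subset[OF Q'd[OF that(1)]]) (use that in auto)
    show "(Qg q0 i has_real_derivative Fr (\<lambda>k. Qg q0 k s) i) (at s within {0..t})" if "i \<in> {1..N}" "s \<in> {0..t}" for i s
      by (rule has_field_derivative_subset[OF Qg_deriv[OF that(1)]]) (use that in auto)
  qed
qed

end



lemma subsingleton_finite: "(\<And>a b. a \<in> S \<Longrightarrow> b \<in> S \<Longrightarrow> a = b) \<Longrightarrow> finite S"
proof (cases "S = {}")
  case False
  then obtain a where "a \<in> S" by auto
  moreover assume "\<And>a b. a \<in> S \<Longrightarrow> b \<in> S \<Longrightarrow> a = b"
  ultimately have "S \<subseteq> {a}" by auto
  then show ?thesis using finite_subset by auto
qed simp

lemma one_zero:
  fixes f f' :: "real \<Rightarrow> real"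
  assumes cf: "continuous_on {0..} f"
    and df: "\<And>\<tau>. \<tau> \<ge> 0 \<Longrightarrow> (f has_real_derivative f' \<tau>) (at \<tau> within {0..})"
    and pz: "\<And>\<tau>. \<tau> \<ge> 0 \<Longrightarrow> f \<tau> = 0 \<Longrightarrow> f' \<tau> > 0"
    and t: "0 \<le> t1" "t1 < t2" "f t1 = 0" "f t2 = 0"
  shows False
proof -
  obtain d where d: "d > 0" "\<And>h. h > 0 \<Longrightarrow> t1 + h \<in> {0..} \<Longrightarrow> h < d \<Longrightarrow> f t1 < f (t1 + h)"
    using has_real_derivative_pos_inc_right[OF df[OF t(1)] pz[OF t(1) t(3)]] by blast
  define m where "m = min d (t2 - t1)"
  define u where "u = t1 + m / 2"
  have m1: "m \<le> t2 - t1" "m > 0" "m \<le> d" using d t unfolding m_def by auto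
  have u1: "t1 < u" unfolding u_def using m1 by linarith
  have u2: "u < t2" unfolding u_def using m1 by linarith
  note u = u1 u2
  have fu: "f u > 0" using d(2)[of "m / 2"] m1 t unfolding u_def by auto
  define Z where "Z = {\<tau>\<in>{u..t2}. f \<tau> = 0}"
  have cZ: "closed Z"
  proof -
    have "Z = {u..t2} \<inter> f -` {0}" unfolding Z_def by auto
    moreover have "closed ({u..t2} \<inter> f -` {0})"
      by (rule continuous_closed_preimage) (use continuous_on_subset[OF cf] u t in auto)
    ultimately show ?thesis by simp
  qed
  have t2Z: "t2 \<in> Z" unfolding Z_def using t u by auto
  have bZ: "bdd_below Z" unfolding Z_def by (auto intro: bdd_belowI[of _ u])
  define z where "z = Inf Z"
  have zZ: "z \<in> Z" unfolding z_def using closed_contains_Inf[OF _ bZ cZ] t2Z by auto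
  have zu: "u < z" using zZ fu unfolding Z_def by (cases "z = u") auto
  have pos: "f \<tau> > 0" if "u \<le> \<tau>" "\<tau> < z" for \<tau>
  proof (rule ccontr)
    assume "\<not> f \<tau> > 0"
    then have "f \<tau> \<le> 0" by simp
    have "continuous_on {u..\<tau>} f" by (rule continuous_on_subset[OF cf]) (use u t that in auto)
    from IVT2'[OF \<open>f \<tau> \<le> 0\<close> _ that(1) this] fu obtain x where x: "u \<le> x" "x \<le> \<tau>" "f x = 0" by auto
    have "x \<in> Z" unfolding Z_def using x that zZ unfolding Z_def by auto
    then have "z \<le> x" unfolding z_def by (rule cInf_lower[OF _ bZ])
    then show False using x that by auto
  qed
  have z0: "z \<ge> 0" "f z = 0" using zZ u t unfolding Z_def by auto
  obtain d' where d': "d' > 0" "\<And>h. h > 0 \<Longrightarrow> z - h \<in> {0..} \<Longrightarrow> h < d' \<Longrightarrow> f (z - h) < f z"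
    using has_real_derivative_pos_inc_left[OF df[OF z0(1)] pz[OF z0]] by blast
  define m' where "m' = min d' (z - u)"
  have m': "m' > 0" "m' \<le> d'" "m' \<le> z - u" unfolding m'_def using d' zu by auto
  define h where "h = m' / 2"
  have h: "h > 0" "h < d'" "u \<le> z - h" "z - h < z" unfolding h_def using m' by linarith+
  have "f (z - h) < 0" using d'(2)[OF h(1) _ h(2)] z0 h u t by auto
  moreover have "f (z - h) > 0" using pos[OF h(3) h(4)] .
  ultimately show False by simp
qed

context sys begin

lemma Sset_mem: "i \<in> {1..N} \<Longrightarrow> s \<ge> 0 \<Longrightarrow>
   j \<in> Sset N (Qg q0) i s \<longleftrightarrow> j \<in> {1..N} \<and> Qg q0 i s = Qg q0 j s \<and> \<nu> i = \<nu> j"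
  unfolding Sset_def stick_def using Qg_vel[of i s q0] Qg_vel[of j s q0] Fr_same(1)[of "\<lambda>k. Qg q0 k s" i j]
  by auto

lemma Cset_mem: "i \<in> {1..N} \<Longrightarrow> s \<ge> 0 \<Longrightarrow>
   j \<in> Cset N (Qg q0) i s \<longleftrightarrow> j \<in> {1..N} \<and> Qg q0 i s = Qg q0 j s \<and> \<nu> i \<noteq> \<nu> j"
  unfolding Cset_def collide_def using Qg_vel[of i s q0] Qg_vel[of j s q0] Fr_same(1)[of "\<lambda>k. Qg q0 k s" i j]
  by auto

lemma stays:
  assumes i: "i \<in> {1..N}" and j: "j \<in> {1..N}" and nu: "\<nu> i = \<nu> j"
    and s: "0 \<le> s" "s \<le> t" and eq: "Qg q0 i s = Qg q0 j s"
  shows "Qg q0 i t = Qg q0 j t"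
proof -
  define D where "D k \<tau> = (if k = (0::nat) then Qg q0 i \<tau> - Qg q0 j \<tau> else Qg q0 j \<tau> - Qg q0 i \<tau>)" for k \<tau>
  define d where "d k \<tau> = (if k = (0::nat) then Fr (\<lambda>k. Qg q0 k \<tau>) i - Fr (\<lambda>k. Qg q0 k \<tau>) j
      else Fr (\<lambda>k. Qg q0 k \<tau>) j - Fr (\<lambda>k. Qg q0 k \<tau>) i)" for k \<tau>
  have main: "D k t \<le> 0 + 0 * (t - s)" if k: "k \<in> {0,1}" for k
  proof (rule cmp[where I="{0,1}" and D=D and d=d, OF _ s(2) _ _ _ _ k])
    have ci: "continuous_on {s..t} (Qg q0 i)" "continuous_on {s..t} (Qg q0 j)"
      using s by (auto intro: continuous_on_subset[OF Qg_cont[OF i, of q0]] continuous_on_subset[OF Qg_cont[OF j, of q0]])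
    show "continuous_on {s..t} (D k)" for k unfolding D_def using ci by (cases "k = 0") (auto intro!: continuous_intros)
    show "(D k has_real_derivative d k \<tau>) (at \<tau> within {\<tau>..t})" if "s \<le> \<tau>" "\<tau> < t" for k \<tau>
    proof -
      have di: "(Qg q0 i has_real_derivative Fr (\<lambda>k. Qg q0 k \<tau>) i) (at \<tau> within {\<tau>..t})"
        by (rule has_field_derivative_subset[OF Qg_deriv[OF i]]) (use that s in auto)
      have dj: "(Qg q0 j has_real_derivative Fr (\<lambda>k. Qg q0 k \<tau>) j) (at \<tau> within {\<tau>..t})"
        by (rule has_field_derivative_subset[OF Qg_deriv[OF j]]) (use that s in auto)
      show ?thesis unfolding D_def d_def by (cases "k = 0") (auto intro!: derivative_intros di dj)
    qed
    fix p \<tau> assume p: "p \<in> {0,1}" and "s \<le> \<tau>" "\<tau> < t" and am: "\<And>k. k \<in> {0,1} \<Longrightarrow> D k \<tau> \<le> D p \<tau>"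
    show "d p \<tau> \<le> 0"
    proof (cases "p = 0")
      case True
      then have "Qg q0 j \<tau> \<le> Qg q0 i \<tau>" using am[of 1] unfolding D_def by auto
      then have "Fr (\<lambda>k. Qg q0 k \<tau>) i \<le> Fr (\<lambda>k. Qg q0 k \<tau>) j" by (intro Fr_pair nu)
      then show ?thesis using True unfolding d_def by simp
    next
      case False
      then have "Qg q0 i \<tau> \<le> Qg q0 j \<tau>" using am[of 0] unfolding D_def by auto
      then have "Fr (\<lambda>k. Qg q0 k \<tau>) j \<le> Fr (\<lambda>k. Qg q0 k \<tau>) i" using nu by (intro Fr_pair) auto
      then show ?thesis using False unfolding d_def by simp
    qed
  qed (use eq s in \<open>auto simp: D_def\<close>)
  show ?thesis using main[of 0] main[of 1] unfolding D_def by simp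
qed

lemma cross_once:
  assumes i: "i \<in> {1..N}" and j: "j \<in> {1..N}" and nu: "\<nu> j < \<nu> i"
    and a: "0 \<le> a" "Qg q0 i a = Qg q0 j a" and b: "0 \<le> b" "Qg q0 i b = Qg q0 j b"
  shows "a = b"
proof -
  have *: False if "0 \<le> t1" "t1 < t2" "Qg q0 i t1 = Qg q0 j t1" "Qg q0 i t2 = Qg q0 j t2" for t1 t2
  proof (rule one_zero[of "\<lambda>\<tau>. Qg q0 i \<tau> - Qg q0 j \<tau>" "\<lambda>\<tau>. Fr (\<lambda>k. Qg q0 k \<tau>) i - Fr (\<lambda>k. Qg q0 k \<tau>) j" t1 t2])
    show "continuous_on {0..} (\<lambda>\<tau>. Qg q0 i \<tau> - Qg q0 j \<tau>)" using Qg_cont[OF i] Qg_cont[OF j] by (intro continuous_intros)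
    show "((\<lambda>\<tau>. Qg q0 i \<tau> - Qg q0 j \<tau>) has_real_derivative Fr (\<lambda>k. Qg q0 k \<tau>) i - Fr (\<lambda>k. Qg q0 k \<tau>) j) (at \<tau> within {0..})"
      if "\<tau> \<ge> 0" for \<tau> using Qg_deriv[OF i that] Qg_deriv[OF j that] by (intro derivative_intros)
    show "Fr (\<lambda>k. Qg q0 k \<tau>) i - Fr (\<lambda>k. Qg q0 k \<tau>) j > 0" if "\<tau> \<ge> 0" "Qg q0 i \<tau> - Qg q0 j \<tau> = 0" for \<tau>
      using Fr_same(2)[of "\<lambda>k. Qg q0 k \<tau>" i j] that nu by auto
  qed (use that in auto)
  show ?thesis by (rule ccontr) (use *[of a b] *[of b a] a b in \<open>auto simp: neq_iff\<close>)
qed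

lemma collisions_finite:
  assumes i: "i \<in> {1..N}"
  shows "finite {t. t > 0 \<and> card (Cset N (Qg q0) i t) \<noteq> 0}"
proof -
  define Z where "Z j = {t. t \<ge> 0 \<and> Qg q0 i t = Qg q0 j t \<and> \<nu> i \<noteq> \<nu> j}" for j
  have fZ: "finite (Z j)" if j: "j \<in> {1..N}" for j
  proof (rule subsingleton_finite)
    fix a b assume a: "a \<in> Z j" and b: "b \<in> Z j"
    show "a = b"
    proof (cases "\<nu> j < \<nu> i")
      case True then show ?thesis using cross_once[OF i j True] a b unfolding Z_def by auto
    next
      case False
      then have lt: "\<nu> i < \<nu> j" using a unfolding Z_def by auto
      have "0 \<le> a" "Qg q0 j a = Qg q0 i a" "0 \<le> b" "Qg q0 j b = Qg q0 i b" using a b unfolding Z_def by auto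
      then show ?thesis by (rule cross_once[OF j i lt])
    qed
  qed
  have "{t. t > 0 \<and> card (Cset N (Qg q0) i t) \<noteq> 0} \<subseteq> (\<Union>j\<in>{1..N}. Z j)"
  proof
    fix t assume "t \<in> {t. t > 0 \<and> card (Cset N (Qg q0) i t) \<noteq> 0}"
    then have t: "t > 0" "Cset N (Qg q0) i t \<noteq> {}" by auto
    then obtain j where "j \<in> Cset N (Qg q0) i t" by auto
    then show "t \<in> (\<Union>j\<in>{1..N}. Z j)" using Cset_mem[OF i, of t j] t unfolding Z_def by auto
  qed
  moreover have "finite (\<Union>j\<in>{1..N}. Z j)" using fZ by auto
  ultimately show ?thesis by (rule finite_subset)
qed

lemma Sset_mono:
  assumes i: "i \<in> {1..N}" and st: "0 \<le> s" "s \<le> t"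
  shows "Sset N (Qg q0) i s \<subseteq> Sset N (Qg q0) i t"
proof
  fix j assume "j \<in> Sset N (Qg q0) i s"
  then have j: "j \<in> {1..N}" "Qg q0 i s = Qg q0 j s" "\<nu> i = \<nu> j" using Sset_mem[OF i st(1)] by auto
  have "Qg q0 i t = Qg q0 j t" by (rule stays[OF i j(1) j(3) st j(2)])
  then show "j \<in> Sset N (Qg q0) i t" using Sset_mem[OF i, of t j] st j by auto
qed

end



lemma ev_within: "eventually (\<lambda>x. x \<in> S) (at a within S)"
  by (simp add: eventually_at_filter)

context sys begin

lemma ev_ne:
  assumes i: "i \<in> {1..N}" and j: "j \<in> {1..N}" and t: "t \<ge> 0" and ne: "Qg q0 i t \<noteq> Qg q0 j t"
    and F: "F \<le> at t within {0..}"
  shows "eventually (\<lambda>s. Qg q0 i s \<noteq> Qg q0 j s) F"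
proof -
  have "continuous_on {0..} (\<lambda>s. Qg q0 i s - Qg q0 j s)" using Qg_cont[OF i] Qg_cont[OF j] by (intro continuous_intros)
  then have "((\<lambda>s. Qg q0 i s - Qg q0 j s) \<longlongrightarrow> Qg q0 i t - Qg q0 j t) (at t within {0..})"
    using t by (simp add: continuous_on_def)
  then have "eventually (\<lambda>s. Qg q0 i s - Qg q0 j s \<noteq> 0) (at t within {0..})"
    by (rule tendsto_imp_eventually_ne) (use ne in auto)
  then have "eventually (\<lambda>s. Qg q0 i s - Qg q0 j s \<noteq> 0) F" using F by (rule filter_leD[rotated])
  then show ?thesis by (rule eventually_mono) auto
qed

lemma card_cont_from_ev:
  assumes i: "i \<in> {1..N}"
    and ev: "\<And>j. j \<in> {1..N} \<Longrightarrow> eventually (\<lambda>s. (j \<in> Sset N (Qg q0) i s) = (j \<in> Sset N (Qg q0) i t)) F"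
  shows "((\<lambda>s. real (card (Sset N (Qg q0) i s))) \<longlongrightarrow> real (card (Sset N (Qg q0) i t))) F"
proof -
  have "eventually (\<lambda>s. \<forall>j\<in>{1..N}. (j \<in> Sset N (Qg q0) i s) = (j \<in> Sset N (Qg q0) i t)) F"
    using ev by (simp add: eventually_ball_finite)
  then have "eventually (\<lambda>s. Sset N (Qg q0) i s = Sset N (Qg q0) i t) F"
  proof (rule eventually_mono)
    fix s assume H: "\<forall>j\<in>{1..N}. (j \<in> Sset N (Qg q0) i s) = (j \<in> Sset N (Qg q0) i t)"
    show "Sset N (Qg q0) i s = Sset N (Qg q0) i t"
    proof (intro set_eqI)
      fix j show "(j \<in> Sset N (Qg q0) i s) = (j \<in> Sset N (Qg q0) i t)"
        using H unfolding Sset_def by (cases "j \<in> {1..N}") auto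
    qed
  qed
  then have "eventually (\<lambda>s. real (card (Sset N (Qg q0) i s)) = real (card (Sset N (Qg q0) i t))) F"
    by (rule eventually_mono) simp
  then show ?thesis by (rule tendsto_eventually)
qed

lemma Sset_rcont:
  assumes i: "i \<in> {1..N}" and t: "t \<ge> 0"
  shows "continuous (at_right t) (\<lambda>s. real (card (Sset N (Qg q0) i s)))"
  unfolding continuous_within
proof (rule card_cont_from_ev[OF i])
  fix j assume j: "j \<in> {1..N}"
  have gt: "eventually (\<lambda>s. t < s) (at_right t)" by (rule eventually_at_right_less)
  show "eventually (\<lambda>s. (j \<in> Sset N (Qg q0) i s) = (j \<in> Sset N (Qg q0) i t)) (at_right t)"
  proof (cases "j \<in> Sset N (Qg q0) i t")
    case True
    show ?thesis using gt
    proof (rule eventually_mono)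
      fix s :: real assume "t < s"
      then show "(j \<in> Sset N (Qg q0) i s) = (j \<in> Sset N (Qg q0) i t)" using Sset_mono[OF i t, of s] True by auto
    qed
  next
    case False
    show ?thesis
    proof (cases "\<nu> i = \<nu> j")
      case False
      show ?thesis using gt
      proof (rule eventually_mono)
        fix s :: real assume "t < s"
        then show "(j \<in> Sset N (Qg q0) i s) = (j \<in> Sset N (Qg q0) i t)"
          using Sset_mem[OF i, of s j] Sset_mem[OF i t, of j] False t by auto
      qed
    next
      case True
      then have ne: "Qg q0 i t \<noteq> Qg q0 j t" using False Sset_mem[OF i t, of j] j by auto
      have le: "at_right t \<le> at t within {0..}" using t by (intro at_le) auto
      show ?thesis using eventually_conj[OF gt ev_ne[OF i j t ne le]]
      proof (rule eventually_mono)
        fix s :: real assume "t < s \<and> Qg q0 i s \<noteq> Qg q0 j s"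
        then show "(j \<in> Sset N (Qg q0) i s) = (j \<in> Sset N (Qg q0) i t)"
          using Sset_mem[OF i, of s j] False t by auto
      qed
    qed
  qed
qed

definition Efirst :: "(nat \<Rightarrow> real) \<Rightarrow> nat \<Rightarrow> real set" where
  "Efirst q0 i = (\<Union>j\<in>{1..N}. {t. t \<ge> 0 \<and> \<nu> i = \<nu> j \<and> Qg q0 i t = Qg q0 j t \<and>
       (\<forall>s. 0 \<le> s \<and> s < t \<longrightarrow> Qg q0 i s \<noteq> Qg q0 j s)})"

lemma Efirst_finite: "finite (Efirst q0 i)"
  unfolding Efirst_def
proof (intro finite_UN_I finite_atLeastAtMost subsingleton_finite)
  fix j a b
  assume a: "a \<in> {t. t \<ge> 0 \<and> \<nu> i = \<nu> j \<and> Qg q0 i t = Qg q0 j t \<and> (\<forall>s. 0 \<le> s \<and> s < t \<longrightarrow> Qg q0 i s \<noteq> Qg q0 j s)}"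
     and b: "b \<in> {t. t \<ge> 0 \<and> \<nu> i = \<nu> j \<and> Qg q0 i t = Qg q0 j t \<and> (\<forall>s. 0 \<le> s \<and> s < t \<longrightarrow> Qg q0 i s \<noteq> Qg q0 j s)}"
  show "a = b"
  proof (rule ccontr)
    assume "a \<noteq> b"
    then have "a < b \<or> b < a" by auto
    then show False using a b by auto
  qed
qed

lemma Sset_cont_at:
  assumes i: "i \<in> {1..N}" and t: "t > 0" and nE: "t \<notin> Efirst q0 i"
  shows "continuous (at t within {0<..}) (\<lambda>s. real (card (Sset N (Qg q0) i s)))"
  unfolding continuous_within
proof (rule card_cont_from_ev[OF i])
  fix j assume j: "j \<in> {1..N}"
  have pos: "eventually (\<lambda>s. s \<in> {0<..}) (at t within {0<..})" by (rule ev_within)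
  show "eventually (\<lambda>s. (j \<in> Sset N (Qg q0) i s) = (j \<in> Sset N (Qg q0) i t)) (at t within {0<..})"
  proof (cases "\<nu> i = \<nu> j")
    case False
    show ?thesis using pos
    proof (rule eventually_mono)
      fix s :: real assume "s \<in> {0<..}"
      then show "(j \<in> Sset N (Qg q0) i s) = (j \<in> Sset N (Qg q0) i t)"
        using Sset_mem[OF i, of s j] Sset_mem[OF i, of t j] False t by auto
    qed
  next
    case nu: True
    show ?thesis
    proof (cases "Qg q0 i t = Qg q0 j t")
      case True
      then obtain s0 where s0: "0 \<le> s0" "s0 < t" "Qg q0 i s0 = Qg q0 j s0"
        using nE nu j t unfolding Efirst_def by fastforce
      have "eventually (\<lambda>s. s0 < s) (at t within {0<..})"
      proof -
        have "eventually (\<lambda>s. s \<in> {s0<..}) (nhds t)" by (rule eventually_nhds_in_open) (use s0 in auto)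
        then show ?thesis unfolding eventually_at_filter by (rule eventually_mono) auto
      qed
      then show ?thesis
      proof (rule eventually_mono)
        fix s :: real assume "s0 < s"
        then have "Qg q0 i s = Qg q0 j s" using stays[OF i j nu s0(1) _ s0(3)] by auto
        then show "(j \<in> Sset N (Qg q0) i s) = (j \<in> Sset N (Qg q0) i t)"
          using Sset_mem[OF i, of s j] Sset_mem[OF i, of t j] True nu j t s0 \<open>s0 < s\<close> by auto
      qed
    next
      case False
      have le: "at t within {0<..} \<le> at t within {0..}" by (intro at_le) auto
      have t0: "0 \<le> t" using t by simp
      show ?thesis using eventually_conj[OF pos ev_ne[OF i j t0 False le]]
      proof (rule eventually_mono)
        fix s :: real assume "s \<in> {0<..} \<and> Qg q0 i s \<noteq> Qg q0 j s"
        then show "(j \<in> Sset N (Qg q0) i s) = (j \<in> Sset N (Qg q0) i t)"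
          using Sset_mem[OF i, of s j] Sset_mem[OF i, of t j] False t by auto
      qed
    qed
  qed
qed

lemma Tset_finite: "finite (Tset N (Qg q0))"
proof -
  have "Tset N (Qg q0) \<subseteq> (\<Union>i\<in>{1..N}. {t. t > 0 \<and> card (Cset N (Qg q0) i t) \<noteq> 0} \<union> Efirst q0 i)"
    unfolding Tset_def using Sset_cont_at by blast
  moreover have "finite (\<Union>i\<in>{1..N}. {t. t > 0 \<and> card (Cset N (Qg q0) i t) \<noteq> 0} \<union> Efirst q0 i)"
    using collisions_finite Efirst_finite by auto
  ultimately show ?thesis by (rule finite_subset)
qed

end



theorem proposition3p3:
  fixes N :: nat and \<kappa> \<alpha> :: real and g g' :: "real \<Rightarrow> real"
    and q0 \<nu> :: "nat \<Rightarrow> real"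
  assumes N: "N \<ge> 1" and kappa: "\<kappa> > 0" and alpha: "0 < \<alpha>" "\<alpha> < 1"
    and g_deriv: "\<forall>x\<ge>0. (g has_real_derivative g' x) (at x within {0..})"
    and g'_cont: "continuous_on {0..} g'"
    and g0: "g 0 = 0"
    and g'_bounds: "\<forall>b\<ge>0. \<exists>m M. 0 < m \<and> (\<forall>x\<in>{0..b}. m \<le> g' x \<and> g' x \<le> M)"
    and g_conv: "convex_on {0<..} g \<or> concave_on {0<..} g"
  shows "\<exists>Q. is_classical_solution g \<kappa> \<alpha> N q0 \<nu> Q
     \<and> (\<forall>Q'. is_classical_solution g \<kappa> \<alpha> N q0 \<nu> Q'
              \<longrightarrow> (\<forall>i\<in>{1..N}. \<forall>t\<ge>0. Q' i t = Q i t))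
     \<and> (\<forall>i\<in>{1..N}. finite {t. t > 0 \<and> card (Cset N Q i t) \<noteq> 0})
     \<and> (\<forall>i\<in>{1..N}. \<forall>s t. 0 \<le> s \<and> s \<le> t \<longrightarrow> Sset N Q i s \<subseteq> Sset N Q i t)
     \<and> (\<forall>i\<in>{1..N}. mono_on {0..} (\<lambda>s. real (card (Sset N Q i s)))
          \<and> (\<forall>t\<ge>0. continuous (at_right t) (\<lambda>s. real (card (Sset N Q i s)))))
     \<and> finite (Tset N Q)"
proof -
  interpret S: sys N \<kappa> \<alpha> g g' \<nu>
    by (unfold_locales) (use N kappa alpha g_deriv g0 g'_bounds in auto)
  define Q where "Q = S.Qg q0"
  have fin: "finite (Sset N Q i s)" for i s unfolding Sset_def by auto
  show ?thesis
  proof (intro exI[of _ Q] conjI allI impI ballI)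
    show "is_classical_solution g \<kappa> \<alpha> N q0 \<nu> Q" unfolding Q_def by (rule S.Qg_classical)
    show "Q' i t = Q i t" if "is_classical_solution g \<kappa> \<alpha> N q0 \<nu> Q'" "i \<in> {1..N}" "t \<ge> 0" for Q' i t
      unfolding Q_def using S.Qg_unique[OF that] .
    show "finite {t. t > 0 \<and> card (Cset N Q i t) \<noteq> 0}" if "i \<in> {1..N}" for i
      unfolding Q_def by (rule S.collisions_finite[OF that])
    show "Sset N Q i s \<subseteq> Sset N Q i t" if "i \<in> {1..N}" "0 \<le> s \<and> s \<le> t" for i s t
      unfolding Q_def using S.Sset_mono[OF that(1)] that(2) by auto
    show "mono_on {0..} (\<lambda>s. real (card (Sset N Q i s)))" if i: "i \<in> {1..N}" for i
    proof (rule mono_onI)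
      fix r s :: real assume "r \<in> {0..}" "s \<in> {0..}" "r \<le> s"
      then have "Sset N Q i r \<subseteq> Sset N Q i s" unfolding Q_def using S.Sset_mono[OF i] by auto
      then show "real (card (Sset N Q i r)) \<le> real (card (Sset N Q i s))" using fin by (simp add: card_mono)
    qed
    show "continuous (at_right t) (\<lambda>s. real (card (Sset N Q i s)))" if "i \<in> {1..N}" "t \<ge> 0" for i t
      unfolding Q_def by (rule S.Sset_rcont[OF that])
    show "finite (Tset N Q)" unfolding Q_def by (rule S.Tset_finite)
  qed
qed


end
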